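(* Let $q\in\mathbb{N}$ and let $T$ be a $q$-frequently hypercyclic operator on a separable complex topological vector space $X$. Then for each $\lambda\in\mathbb{C}$ with $|\lambda|=1$ and each $p\in\mathbb{N}$, the operators $\lambda T$ and $T^p$ are $q$-frequently hypercyclic, and moreover $qFHC(T)=qFHC(\lambda T)=qFHC(T^p)$.
   Context: For $q\in\mathbb{N}$, a continuous linear operator $T$ on a separable topological vector space $X$ is $q$-frequently hypercyclic if there is $x\in X$ (a $q$-frequently hypercyclic vector) such that for every nonempty open $U\subset X$ the set $\{n\in\mathbb{N}:T^nx\in U\}$ has positive $q$-lower density, where $q\text{-}\underline{\mathrm{dens}}(A)=\liminf_{N\to\infty}\frac{\mathrm{card}\{n\in A:n\le N^q\}}{N}$. $qFHC(T)$ denotes the set of all $q$-frequently hypercyclic vectors of $T$. *)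

theory Defs
  imports "HOL-Analysis.Analysis"
begin

definition complex_tvs :: "(complex \<Rightarrow> 'a::{ab_group_add,topological_space} \<Rightarrow> 'a) \<Rightarrow> bool" where
  "complex_tvs sc \<longleftrightarrow> vector_space sc
     \<and> continuous_on UNIV (\<lambda>(x::'a, y::'a). x + y)
     \<and> continuous_on UNIV (\<lambda>(c::complex, x::'a). sc c x)"

definition separable_type :: "'a::topological_space itself \<Rightarrow> bool" where
  "separable_type _ \<longleftrightarrow> (\<exists>D::'a set. countable D \<and> closure D = UNIV)"

definition cont_lin_op :: "(complex \<Rightarrow> 'a::{ab_group_add,topological_space} \<Rightarrow> 'a) \<Rightarrow> ('a \<Rightarrow> 'a) \<Rightarrow> bool" where
  "cont_lin_op sc T \<longleftrightarrow> Vector_Spaces.linear sc sc T \<and> continuous_on UNIV T"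

definition q_lower_dens :: "nat \<Rightarrow> nat set \<Rightarrow> ereal" where
  "q_lower_dens q A = liminf (\<lambda>N::nat. ereal (real (card {n\<in>A. n \<le> N ^ q}) / real N))"

definition qFHC :: "nat \<Rightarrow> ('a::topological_space \<Rightarrow> 'a) \<Rightarrow> 'a set" where
  "qFHC q T = {x. \<forall>U. open U \<and> U \<noteq> {} \<longrightarrow> q_lower_dens q {n. (T ^^ n) x \<in> U} > 0}"

definition q_freq_hypercyclic :: "nat \<Rightarrow> ('a::topological_space \<Rightarrow> 'a) \<Rightarrow> bool" where
  "q_freq_hypercyclic q T \<longleftrightarrow> qFHC q T \<noteq> {}"

end

theory Submission
  imports Defs "HOL-Computational_Algebra.Fundamental_Theorem_Algebra" "HOL-Analysis.Analysis"
begin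

locale tvs = vector_space sc for sc :: "complex \<Rightarrow> 'a::{ab_group_add,topological_space} \<Rightarrow> 'a" +
  assumes add_cont: "continuous_on UNIV (\<lambda>(x::'a, y::'a). x + y)"
    and sc_cont: "continuous_on UNIV (\<lambda>(c::complex, x::'a). sc c x)"
begin

definition clo :: "('a \<Rightarrow> 'a) \<Rightarrow> bool" where
  "clo T \<longleftrightarrow> (\<forall>x y. T (x + y) = T x + T y) \<and> (\<forall>c x. T (sc c x) = sc c (T x)) \<and> continuous_on UNIV T"

lemma clo_add: "clo T \<Longrightarrow> T (x + y) = T x + T y" by (simp add: clo_def)
lemma clo_sc: "clo T \<Longrightarrow> T (sc c x) = sc c (T x)" by (simp add: clo_def)
lemma clo_cont: "clo T \<Longrightarrow> continuous_on S T"
  unfolding clo_def using continuous_on_subset by blast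
lemma clo_zero: "clo T \<Longrightarrow> T 0 = 0"
  using clo_sc[of T 0 0] by simp
lemma clo_minus: "clo T \<Longrightarrow> T (- x) = - T x"
  using clo_sc[of T "-1" x] by simp
lemma clo_diff: "clo T \<Longrightarrow> T (x - y) = T x - T y"
  by (metis clo_add clo_minus diff_conv_add_uminus)
lemma clo_sum: "clo T \<Longrightarrow> T (sum f I) = (\<Sum>i\<in>I. T (f i))"
  by (induction I rule: infinite_finite_induct) (auto simp: clo_zero clo_add)

lemma cont_add [continuous_intros]:
  fixes f g :: "'b::topological_space \<Rightarrow> 'a"
  shows "continuous_on S f \<Longrightarrow> continuous_on S g \<Longrightarrow> continuous_on S (\<lambda>z. f z + g z)"
proof -
  assume f: "continuous_on S f" and g: "continuous_on S g"
  have "continuous_on S ((\<lambda>(x,y). x+y) \<circ> (\<lambda>z. (f z, g z)))"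
    by (rule continuous_on_compose[OF continuous_on_Pair[OF f g] continuous_on_subset[OF add_cont]]) simp
  then show ?thesis by (simp add: o_def)
qed

lemma cont_sc [continuous_intros]:
  fixes f :: "'b::topological_space \<Rightarrow> 'a" and h :: "'b \<Rightarrow> complex"
  shows "continuous_on S h \<Longrightarrow> continuous_on S f \<Longrightarrow> continuous_on S (\<lambda>z. sc (h z) (f z))"
proof -
  assume h: "continuous_on S h" and f: "continuous_on S f"
  have "continuous_on S ((\<lambda>(c,x). sc c x) \<circ> (\<lambda>z. (h z, f z)))"
    by (rule continuous_on_compose[OF continuous_on_Pair[OF h f] continuous_on_subset[OF sc_cont]]) simp
  then show ?thesis by (simp add: o_def)
qed

lemma cont_minus [continuous_intros]:
  fixes f :: "'b::topological_space \<Rightarrow> 'a"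
  shows "continuous_on S f \<Longrightarrow> continuous_on S (\<lambda>z. - f z)"
proof -
  assume f: "continuous_on S f"
  have "continuous_on S (\<lambda>z. sc (-1) (f z))" by (rule cont_sc[OF continuous_on_const f])
  then show ?thesis by simp
qed

lemma cont_diff [continuous_intros]:
  fixes f g :: "'b::topological_space \<Rightarrow> 'a"
  shows "continuous_on S f \<Longrightarrow> continuous_on S g \<Longrightarrow> continuous_on S (\<lambda>z. f z - g z)"
  unfolding diff_conv_add_uminus by (intro cont_add cont_minus)

lemma cont_sum [continuous_intros]:
  fixes f :: "'i \<Rightarrow> 'b::topological_space \<Rightarrow> 'a"
  shows "(\<And>i. i \<in> I \<Longrightarrow> continuous_on S (f i)) \<Longrightarrow> continuous_on S (\<lambda>z. \<Sum>i\<in>I. f i z)"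
proof (induction I rule: infinite_finite_induct)
  case (insert i I) then show ?case by (auto intro!: cont_add)
qed (auto intro: continuous_on_const)

lemma open_sc_image:
  fixes U :: "'a set"
  shows "c \<noteq> 0 \<Longrightarrow> open U \<Longrightarrow> open (sc c ` U)"
proof -
  assume c: "c \<noteq> 0" and U: "open U"
  have "sc c ` U = UNIV \<inter> (sc (inverse c)) -` U"
    using c by (auto simp: image_iff) (metis c right_inverse scale_one scale_scale)
  moreover have "continuous_on UNIV (sc (inverse c))"
    using cont_sc[of UNIV "\<lambda>_. inverse c" "\<lambda>x. x"] by (simp add: continuous_on_const continuous_on_id)
  ultimately show ?thesis using continuous_on_open_vimage[OF open_UNIV, THEN iffD1, rule_format, OF _ U] by auto
qed

lemma open_translate:
  fixes U :: "'a set"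
  shows "open U \<Longrightarrow> open {y. y + a \<in> U}"
proof -
  assume U: "open U"
  have "continuous_on UNIV (\<lambda>y. y + a)"
    by (rule cont_add) (rule continuous_on_id, rule continuous_on_const)
  from continuous_on_open_vimage[OF open_UNIV, THEN iffD1, rule_format, OF this U] show ?thesis by (simp add: vimage_def)
qed

lemma dense_meets: "closure S = UNIV \<Longrightarrow> open U \<Longrightarrow> U \<noteq> {} \<Longrightarrow> S \<inter> U \<noteq> {}"
  using open_Int_closure_eq_empty[of U S] by auto

lemma dense_comp:
  assumes "closure (range f) = UNIV" "closure (range g) = UNIV" "continuous_on UNIV f"
  shows "closure (range (\<lambda>y. f (g y))) = UNIV"
proof -
  have "f ` closure (range g) \<subseteq> closure (f ` range g)"
    by (rule image_closure_subset[OF continuous_on_subset[OF assms(3)]]) (auto intro: closure_subset[THEN subsetD])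
  then have "range f \<subseteq> closure (range (\<lambda>y. f (g y)))" using assms(2) by (simp add: image_image)
  then have "closure (range f) \<subseteq> closure (range (\<lambda>y. f (g y)))"
    by (simp add: closure_minimal)
  then show ?thesis using assms(1) by auto
qed

lemma clo_funpow: "clo T \<Longrightarrow> clo (T ^^ n)"
proof (induction n)
  case 0 then show ?case by (simp add: clo_def continuous_on_id)
next
  case (Suc n)
  then have "clo (T ^^ n)" by simp
  then show ?case using Suc.prems unfolding clo_def
    by (auto intro: continuous_on_compose2[of UNIV T])
qed

end

context tvs
begin

lemma dense_range_shift:
  assumes T: "clo T" and dense: "closure (range (\<lambda>n. (T ^^ n) x)) = UNIV"
  shows "closure (range (\<lambda>y. T y - sc a y)) = UNIV"
proof (rule ccontr)
  let ?R = "range (\<lambda>y. T y - sc a y)"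
  let ?M = "closure ?R"
  assume nd: "?M \<noteq> UNIV"
  have R_add: "u \<in> ?R \<Longrightarrow> v \<in> ?R \<Longrightarrow> u + v \<in> ?R" for u v
  proof -
    assume "u \<in> ?R" "v \<in> ?R"
    then obtain y z where "u = T y - sc a y" "v = T z - sc a z" by auto
    then have "u + v = T (y + z) - sc a (y + z)" using T by (simp add: clo_add scale_right_distrib)
    then show ?thesis by blast
  qed
  have R_sc: "u \<in> ?R \<Longrightarrow> sc c u \<in> ?R" for u c
  proof -
    assume "u \<in> ?R"
    then obtain y where "u = T y - sc a y" by auto
    then have "sc c u = T (sc c y) - sc a (sc c y)" using T
      by (simp add: clo_sc scale_right_diff_distrib mult.commute)
    then show ?thesis by blast
  qed
  have R_T: "u \<in> ?R \<Longrightarrow> T u \<in> ?R" for u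
  proof -
    assume "u \<in> ?R"
    then obtain y where "u = T y - sc a y" by auto
    then have "T u = T (T y) - sc a (T y)" using T by (simp add: clo_diff clo_sc)
    then show ?thesis by blast
  qed
  have M_sc: "u \<in> ?M \<Longrightarrow> sc c u \<in> ?M" for u c
  proof -
    have "sc c ` ?M \<subseteq> ?M"
    proof (rule image_closure_subset)
      show "continuous_on ?M (sc c)" by (rule cont_sc[OF continuous_on_const continuous_on_id])
      show "sc c ` ?R \<subseteq> ?M" using R_sc closure_subset by blast
    qed simp
    then show "u \<in> ?M \<Longrightarrow> sc c u \<in> ?M" by auto
  qed
  have M_addR: "u \<in> ?M \<Longrightarrow> r \<in> ?R \<Longrightarrow> u + r \<in> ?M" for u r
  proof -
    assume r: "r \<in> ?R"
    have "(\<lambda>y. y + r) ` ?M \<subseteq> ?M"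
    proof (rule image_closure_subset)
      show "continuous_on ?M (\<lambda>y. y + r)" by (rule cont_add[OF continuous_on_id continuous_on_const])
      show "(\<lambda>y. y + r) ` ?R \<subseteq> ?M" using R_add[OF _ r] closure_subset by blast
    qed simp
    then show "u \<in> ?M \<Longrightarrow> u + r \<in> ?M" by auto
  qed
  have M_add: "u \<in> ?M \<Longrightarrow> v \<in> ?M \<Longrightarrow> u + v \<in> ?M" for u v
  proof -
    assume u: "u \<in> ?M"
    have "(\<lambda>y. u + y) ` ?M \<subseteq> ?M"
    proof (rule image_closure_subset)
      show "continuous_on ?M (\<lambda>y. u + y)" by (rule cont_add[OF continuous_on_const continuous_on_id])
      show "(\<lambda>y. u + y) ` ?R \<subseteq> ?M" using M_addR[OF u] by blast
    qed simp
    then show "v \<in> ?M \<Longrightarrow> u + v \<in> ?M" by auto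
  qed
  have orb: "(T ^^ n) x - sc (a ^ n) x \<in> ?R" for n
  proof (induction n)
    case 0
    have "T 0 - sc a 0 \<in> ?R" by (rule rangeI)
    then show ?case using T by (simp add: clo_zero)
  next
    case (Suc n)
    have "(T ^^ Suc n) x - sc (a ^ Suc n) x
        = T ((T ^^ n) x - sc (a ^ n) x) + sc (a ^ n) (T x - sc a x)"
      using T by (simp add: clo_diff clo_sc scale_right_diff_distrib mult.commute)
    moreover have "T x - sc a x \<in> ?R" by auto
    ultimately show ?case using R_add R_sc R_T Suc by simp
  qed
  show False
  proof (cases "x \<in> ?M")
    case True
    have "(T ^^ n) x \<in> ?M" for n
    proof -
      have "(T ^^ n) x = sc (a ^ n) x + ((T ^^ n) x - sc (a ^ n) x)" by simp
      moreover have "sc (a ^ n) x + ((T ^^ n) x - sc (a ^ n) x) \<in> ?M"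
        using M_add[OF M_sc[OF True] closure_subset[THEN subsetD, OF orb[of n]]] .
      ultimately show ?thesis by metis
    qed
    then have "range (\<lambda>n. (T ^^ n) x) \<subseteq> ?M" by auto
    then have "closure (range (\<lambda>n. (T ^^ n) x)) \<subseteq> ?M" by (simp add: closure_minimal)
    then show False using dense nd by auto
  next
    case False
    have key: "\<exists>G. open G \<and> 0 \<in> G \<and> (\<forall>t m. m \<in> ?M \<longrightarrow> sc t x + m \<in> G \<longrightarrow> cmod t < e)"
      if e: "e > 0" for e :: real
    proof -
      have "open {y. y + x \<in> - ?M}" by (rule open_translate) auto
      moreover have "0 \<in> {y. y + x \<in> - ?M}" using False by simp
      ultimately obtain B where B: "open B" "0 \<in> B" "\<And>y. y \<in> B \<Longrightarrow> y + x \<notin> ?M" by blast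
      have "open ((\<lambda>(c, y). sc c y) -` B)"
        using continuous_on_open_vimage[OF open_UNIV, THEN iffD1, rule_format, OF sc_cont B(1)] by simp
      moreover have "(0, 0) \<in> (\<lambda>(c, y). sc c y) -` B" using B(2) by simp
      ultimately obtain C W where CW: "open C" "open W" "(0, 0) \<in> C \<times> W"
        "C \<times> W \<subseteq> (\<lambda>(c, y). sc c y) -` B"
        by (rule open_prod_elim)
      have "0 \<in> C" using CW(3) by simp
      then obtain d where d: "d > 0" "ball 0 d \<subseteq> C" using CW(1) openE by metis
      define r where "r = complex_of_real (e * d / 2)"
      have r0: "r \<noteq> 0" using e d by (simp add: r_def)
      have cr: "cmod r = e * d / 2" using e d unfolding r_def norm_of_real by simp
      show ?thesis
      proof (intro exI conjI allI impI)
        show "open (sc r ` W)" by (rule open_sc_image[OF r0 CW(2)])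
        show "0 \<in> sc r ` W" using CW(3) by (auto intro: image_eqI[of _ _ 0])
        fix t m assume m: "m \<in> ?M" and tG: "sc t x + m \<in> sc r ` W"
        then obtain w where w: "w \<in> W" "sc t x + m = sc r w" by auto
        show "cmod t < e"
        proof (rule ccontr)
          assume "\<not> cmod t < e"
          then have te: "cmod t \<ge> e" by simp
          then have t0: "t \<noteq> 0" using e by auto
          define c where "c = - r / t"
          have "cmod c = e * d / 2 / cmod t" by (simp add: c_def norm_divide cr)
          also have "\<dots> \<le> e * d / 2 / e"
          proof -
            have "cmod t > 0" using te e by linarith
            then have "0 < cmod t * e" using e by simp
            then show ?thesis using te e d by (intro divide_left_mono) auto
          qed
          also have "\<dots> < d" using e d by simp
          finally have "c \<in> C" using d by auto
          then have "sc c w \<in> B" using CW(4) w(1) by auto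
          moreover have "sc c w = - x - sc (inverse t) m"
          proof -
            have "sc c w = sc (- inverse t) (sc r w)" by (simp add: c_def field_simps)
            also have "\<dots> = sc (- inverse t) (sc t x + m)" by (simp add: w)
            also have "\<dots> = - x - sc (inverse t) m" using t0
              by (simp add: scale_right_distrib)
            finally show ?thesis .
          qed
          ultimately have "- x - sc (inverse t) m \<in> B" by simp
          then have "- x - sc (inverse t) m + x \<notin> ?M" by (rule B(3))
          moreover have "- x - sc (inverse t) m + x = sc (- inverse t) m" by simp
          ultimately show False using M_sc[OF m] by metis
        qed
      qed
    qed
    obtain c0 where c0: "\<And>n. cmod (a ^ n - c0) \<ge> 1"
    proof (cases "cmod a \<le> 1")
      case True
      have "cmod (a ^ n - 3) \<ge> 1" for n
      proof -
        have "cmod (a ^ n) \<le> 1" using True by (simp add: norm_power power_le_one)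
        moreover have "cmod (3::complex) \<le> cmod (a ^ n - 3) + cmod (a ^ n)"
          using norm_triangle_ineq[of "3 - a ^ n" "a ^ n"] norm_minus_commute[of "a ^ n" 3] by simp
        ultimately show ?thesis by simp
      qed
      then show ?thesis using that by blast
    next
      case False
      have "cmod (a ^ n - 0) \<ge> 1" for n using False by (simp add: norm_power one_le_power)
      then show ?thesis using that by blast
    qed
    obtain G where G: "open G" "0 \<in> G" "\<And>t m. m \<in> ?M \<Longrightarrow> sc t x + m \<in> G \<Longrightarrow> cmod t < 1"
      using key[of 1] by auto
    have "open {y. y + (- sc c0 x) \<in> G}" by (rule open_translate[OF G(1)])
    moreover have "sc c0 x \<in> {y. y + (- sc c0 x) \<in> G}" using G(2) by simp
    ultimately obtain n where n: "(T ^^ n) x + (- sc c0 x) \<in> G"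
      using dense_meets[OF dense] by blast
    have eq: "(T ^^ n) x + (- sc c0 x) = sc (a ^ n - c0) x + ((T ^^ n) x - sc (a ^ n) x)"
      by (simp add: scale_left_diff_distrib)
    have inM: "(T ^^ n) x - sc (a ^ n) x \<in> ?M" using closure_subset orb by blast
    have "sc (a ^ n - c0) x + ((T ^^ n) x - sc (a ^ n) x) \<in> G" using n unfolding eq .
    then have "cmod (a ^ n - c0) < 1" by (rule G(3)[OF inM])
    then show False using c0[of n] by simp
  qed
qed

end

context tvs
begin

definition opoly :: "('a \<Rightarrow> 'a) \<Rightarrow> complex poly \<Rightarrow> 'a \<Rightarrow> 'a" where
  "opoly T p y = (\<Sum>i\<le>degree p. sc (coeff p i) ((T ^^ i) y))"

lemma opoly_upto:
  assumes "degree p \<le> N"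
  shows "opoly T p y = (\<Sum>i\<le>N. sc (coeff p i) ((T ^^ i) y))"
  unfolding opoly_def
  by (rule sum.mono_neutral_left) (use assms in \<open>auto simp: coeff_eq_0\<close>)

lemma opoly_lin:
  assumes T: "clo T"
  shows "opoly T ([:-a, 1:] * q) y = T (opoly T q y) - sc a (opoly T q y)"
proof -
  define d where "d = degree q"
  have deg: "degree ([:-a, 1:] * q) \<le> Suc d"
    using degree_mult_le[of "[:-a, 1:]" q] by (simp add: d_def)
  have co: "coeff ([:-a, 1:] * q) i = (if i = 0 then 0 else coeff q (i - 1)) - a * coeff q i" for i
    by (simp add: coeff_pCons')
  have "opoly T ([:-a, 1:] * q) y = (\<Sum>i\<le>Suc d. sc (coeff ([:-a, 1:] * q) i) ((T ^^ i) y))"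
    by (rule opoly_upto[OF deg])
  also have "\<dots> = (\<Sum>i\<le>Suc d. sc (if i = 0 then 0 else coeff q (i - 1)) ((T ^^ i) y))
                 - (\<Sum>i\<le>Suc d. sc (a * coeff q i) ((T ^^ i) y))"
    unfolding co scale_left_diff_distrib by (rule sum_subtractf)
  also have "(\<Sum>i\<le>Suc d. sc (if i = 0 then 0 else coeff q (i - 1)) ((T ^^ i) y))
      = (\<Sum>i\<le>d. sc (coeff q i) (T ((T ^^ i) y)))"
    by (subst sum.atMost_Suc_shift) simp
  also have "\<dots> = T (opoly T q y)"
    unfolding opoly_def d_def using T by (simp add: clo_sum clo_sc)
  also have "(\<Sum>i\<le>Suc d. sc (a * coeff q i) ((T ^^ i) y)) = sc a (opoly T q y)"
  proof -
    have "opoly T q y = (\<Sum>i\<le>Suc d. sc (coeff q i) ((T ^^ i) y))"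
      by (rule opoly_upto) (simp add: d_def)
    show ?thesis unfolding \<open>opoly T q y = _\<close> scale_sum_right scale_scale by (rule refl)
  qed
  finally show ?thesis .
qed

lemma clo_opoly:
  assumes T: "clo T"
  shows "clo (opoly T p)"
proof -
  have Ti: "clo (T ^^ i)" for i by (rule clo_funpow[OF T])
  have "opoly T p (x + y) = opoly T p x + opoly T p y" for x y
    unfolding opoly_def using Ti by (simp add: clo_add scale_right_distrib sum.distrib)
  moreover have "opoly T p (sc c x) = sc c (opoly T p x)" for c x
    unfolding opoly_def using Ti by (simp add: clo_sc scale_sum_right mult.commute)
  moreover have "continuous_on UNIV (opoly T p)"
    unfolding opoly_def
    by (intro cont_sum cont_sc continuous_on_const clo_cont[OF Ti])
  ultimately show ?thesis by (simp add: clo_def)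
qed

lemma opoly_comm:
  assumes T: "clo T"
  shows "opoly T p (T y) = T (opoly T p y)"
  unfolding opoly_def using T by (simp add: clo_sum clo_sc funpow_swap1)

lemma opoly_dense:
  assumes T: "clo T" and dense: "closure (range (\<lambda>n. (T ^^ n) x)) = UNIV" and p: "p \<noteq> 0"
  shows "closure (range (opoly T p)) = UNIV"
  using p
proof (induction "degree p" arbitrary: p rule: less_induct)
  case less
  show ?case
  proof (cases "degree p = 0")
    case True
    define c where "c = coeff p 0"
    have c0: "c \<noteq> 0" using less.prems True leading_coeff_neq_0[of p] by (simp add: c_def)
    have "opoly T p y = sc c y" for y unfolding opoly_def c_def using True by simp
    then have "range (opoly T p) = UNIV"
      using c0 by (auto simp: image_iff intro!: exI[of _ "sc (inverse c) _"])
    then show ?thesis by simp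
  next
    case False
    then have "\<not> constant (poly p)" by (simp add: constant_degree)
    then obtain z where "poly p z = 0" using fundamental_theorem_of_algebra by blast
    then have "[:- z, 1:] dvd p" using dvd_iff_poly_eq_0[of "-z" p] by simp
    then obtain q where pq: "p = [:- z, 1:] * q" by (elim dvdE)
    have q0: "q \<noteq> 0" using less.prems pq by auto
    have "degree ([:-z,1:]*q) = degree [:-z,1:] + degree q" by (rule degree_mult_eq) (auto simp: q0)
    then have "degree p = 1 + degree q" using pq by simp
    then have "degree q < degree p" by simp
    then have IH: "closure (range (opoly T q)) = UNIV" using less.hyps q0 by blast
    have eq: "opoly T p = (\<lambda>y. (\<lambda>u. T u - sc z u) (opoly T q y))"
      using pq opoly_lin[OF T] by auto
    show ?thesis unfolding eq
    proof (rule dense_comp[OF dense_range_shift[OF T dense] IH])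
      show "continuous_on UNIV (\<lambda>u. T u - sc z u)"
        by (intro cont_diff clo_cont[OF T] cont_sc continuous_on_const continuous_on_id)
    qed
  qed
qed

end

lemma cis_minus_one_le: "cmod (cis t - 1) \<le> \<bar>t\<bar>"
proof -
  have "(cmod (cis t - 1))\<^sup>2 = (cos t - 1)\<^sup>2 + (sin t)\<^sup>2"
    by (simp add: cmod_power2 cis.ctr)
  also have "\<dots> = 2 - 2 * cos t"
    using sin_cos_squared_add[of t] by (simp add: power2_eq_square algebra_simps)
  also have "\<dots> = 4 * (sin (t / 2))\<^sup>2"
    using cos_double_sin[of "t/2"] by simp
  also have "\<dots> \<le> 4 * (t / 2)\<^sup>2"
    using abs_sin_x_le_abs_x[of "t/2"]
    by (intro mult_left_mono) (auto intro: power_mono simp flip: abs_le_square_iff)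
  also have "\<dots> = t\<^sup>2" by (simp add: power2_eq_square)
  finally have "(cmod (cis t - 1))\<^sup>2 \<le> \<bar>t\<bar>\<^sup>2" by simp
  then show ?thesis by (rule power2_le_imp_le) simp
qed

lemma cis_dist_le: "cmod (cis a - cis b) \<le> \<bar>a - b\<bar>"
proof -
  have "cis a - cis b = cis b * (cis (a - b) - 1)"
    by (simp add: algebra_simps cis_mult)
  then have "cmod (cis a - cis b) = cmod (cis (a - b) - 1)" by (simp add: norm_mult)
  then show ?thesis using cis_minus_one_le by simp
qed

lemma unit_eq_cis: assumes "cmod z = 1" shows "cis (Arg z) = z"
proof -
  have "z \<noteq> 0" using assms by auto
  then have "cis (Arg z) = sgn z" by (rule cis_Arg)
  also have "sgn z = z / of_real (cmod z)" by (simp add: sgn_div_norm scaleR_conv_of_real divide_inverse mult.commute)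
  finally show ?thesis using assms by simp
qed

context
  fixes H :: "complex set"
  assumes Hc: "closed H" and Hs: "H \<subseteq> sphere 0 1" and H1: "1 \<in> H"
    and Hm: "\<And>a b. a \<in> H \<Longrightarrow> b \<in> H \<Longrightarrow> a * b \<in> H"
begin

lemma H_pow: "a \<in> H \<Longrightarrow> a ^ n \<in> H"
  by (induction n) (auto simp: H1 Hm)

lemma H_norm: "a \<in> H \<Longrightarrow> cmod a = 1" using Hs by auto

lemma H_inv: assumes a: "a \<in> H" shows "inverse a \<in> H"
proof -
  have an: "cmod a = 1" using H_norm a by simp
  have "inverse a \<in> closure H"
    unfolding closure_approachable
  proof (intro allI impI)
    fix e :: real assume e: "e > 0"
    have "\<forall>n. a ^ n \<in> sphere (0::complex) 1" using an by (simp add: norm_power)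
    then obtain l r where r: "strict_mono r" "((\<lambda>n. a ^ n) \<circ> r) \<longlonglongrightarrow> l"
      using compact_imp_seq_compact[OF compact_sphere] seq_compactE by metis
    have "Cauchy ((\<lambda>n. a ^ n) \<circ> r)" using r(2) by (rule LIMSEQ_imp_Cauchy)
    then obtain N where N: "\<And>m n. m \<ge> N \<Longrightarrow> n \<ge> N \<Longrightarrow> dist (a ^ r m) (a ^ r n) < e"
      using e unfolding Cauchy_def o_def by meson
    have lt: "r N < r (Suc N)" using r(1) by (simp add: strict_mono_def)
    define j where "j = r (Suc N) - r N - 1"
    have rs: "r (Suc N) = r N + 1 + j" using lt by (simp add: j_def)
    have "a ^ r (Suc N) - a ^ r N = a ^ (r N + 1) * (a ^ j - inverse a)"
      using an by (auto simp: rs power_add field_simps)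
    then have "cmod (a ^ r (Suc N) - a ^ r N) = cmod (a ^ j - inverse a)"
      using an by (simp add: norm_mult norm_power)
    moreover have "dist (a ^ r (Suc N)) (a ^ r N) < e" using N by simp
    ultimately have "dist (a ^ j) (inverse a) < e" by (simp add: dist_norm)
    then show "\<exists>y\<in>H. dist y (inverse a) < e" using H_pow[OF a] by blast
  qed
  then show ?thesis using Hc by (simp add: closure_closed)
qed

lemma H_infinite_full:
  assumes inf: "infinite H" and z: "cmod z = 1"
  shows "z \<in> H"
proof -
  define A where "A = {t \<in> {-pi..pi}. cis t \<in> H}"
  have "H \<subseteq> cis ` A"
  proof
    fix w assume w: "w \<in> H"
    then have "cis (Arg w) = w" using H_norm unit_eq_cis by blast
    moreover have "Arg w \<in> {-pi..pi}" using Arg_bounded[of w] by auto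
    ultimately show "w \<in> cis ` A" using w unfolding A_def by force
  qed
  then have "infinite A" using inf finite_surj by blast
  moreover have "A \<subseteq> {-pi..pi}" by (auto simp: A_def)
  ultimately obtain t0 where t0: "t0 islimpt A"
    using compact_eq_Bolzano_Weierstrass[THEN iffD1, OF compact_Icc, rule_format, of A] by blast
  have small: "\<exists>d. cis d \<in> H \<and> 0 < d \<and> d < e" if e: "e > 0" for e
  proof -
    obtain t1 where t1: "t1 \<in> A" "t1 \<noteq> t0" "dist t1 t0 < e / 2"
      using t0 e unfolding islimpt_approachable by (meson half_gt_zero)
    have "dist t1 t0 > 0" using t1 by simp
    then obtain t2 where t2: "t2 \<in> A" "t2 \<noteq> t0" "dist t2 t0 < min (e/2) (dist t1 t0)"
      using t0 e unfolding islimpt_approachable by (meson half_gt_zero min_less_iff_conj)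
    have ne: "t1 \<noteq> t2" using t2 by auto
    have a1: "\<bar>t1 - t0\<bar> < e/2" using t1(3) by (simp add: dist_real_def)
    have a2: "\<bar>t2 - t0\<bar> < e/2" using t2(3) by (simp add: dist_real_def)
    have de: "\<bar>t1 - t2\<bar> < e" using a1 a2 by arith
    have h1: "cis t1 \<in> H" "cis t2 \<in> H" using t1 t2 by (auto simp: A_def)
    have c12: "cis (t1 - t2) \<in> H"
      using Hm[OF h1(1) H_inv[OF h1(2)]] by (simp add: cis_divide[symmetric] divide_inverse)
    have c21: "cis (t2 - t1) \<in> H"
      using Hm[OF h1(2) H_inv[OF h1(1)]] by (simp add: cis_divide[symmetric] divide_inverse)
    show ?thesis
    proof (cases "t1 > t2")
      case True then show ?thesis using c12 de by (intro exI[of _ "t1 - t2"]) auto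
    next
      case False then show ?thesis using c21 de ne by (intro exI[of _ "t2 - t1"]) auto
    qed
  qed
  have "z \<in> closure H"
    unfolding closure_approachable
  proof (intro allI impI)
    fix e :: real assume e: "e > 0"
    obtain d where d: "cis d \<in> H" "0 < d" "d < e" using small[OF e] by blast
    define b where "b = Arg z + 2 * pi"
    have b0: "b \<ge> 0" using Arg_bounded[of z] by (simp add: b_def)
    have cb: "cis b = z" using unit_eq_cis[OF z] by (simp add: b_def cis_mult[symmetric])
    define m where "m = nat \<lfloor>b / d\<rfloor>"
    have m1: "real m * d \<le> b"
    proof -
      have "real m \<le> b / d" using b0 d by (simp add: m_def)
      then show ?thesis using d by (simp add: field_simps)
    qed
    have m2: "b < real m * d + d"
    proof -
      have "b / d < real m + 1" using b0 d by (simp add: m_def)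
      then show ?thesis using d by (simp add: field_simps)
    qed
    have "cis d ^ m \<in> H" by (rule H_pow[OF d(1)])
    moreover have "cis d ^ m = cis (real m * d)" by (rule Complex.DeMoivre)
    moreover have "dist (cis (real m * d)) z < e"
    proof -
      have "dist (cis (real m * d)) z = cmod (cis (real m * d) - cis b)" by (simp add: dist_norm cb)
      also have "\<dots> \<le> \<bar>real m * d - b\<bar>" by (rule cis_dist_le)
      also have "\<dots> < e" using m1 m2 d by simp
      finally show ?thesis .
    qed
    ultimately show "\<exists>y\<in>H. dist y z < e" by metis
  qed
  then show ?thesis using Hc by (simp add: closure_closed)
qed

lemma H_finite_roots:
  assumes fin: "finite H"
  shows "\<forall>w\<in>H. w ^ card H = 1"
proof
  fix w assume w: "w \<in> H"
  have inj: "inj_on (\<lambda>g. w * g) H"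
    using H_norm[OF w] by (auto simp: inj_on_def)
  have img: "(\<lambda>g. w * g) ` H = H"
  proof (rule card_subset_eq[OF fin])
    show "(\<lambda>g. w * g) ` H \<subseteq> H" using Hm w by auto
    show "card ((\<lambda>g. w * g) ` H) = card H" using card_image[OF inj] .
  qed
  have "prod (\<lambda>g. g) H = prod (\<lambda>g. g) ((\<lambda>g. w * g) ` H)" using img by simp
  also have "\<dots> = prod (\<lambda>g. w * g) H" using prod.reindex[OF inj] by simp
  also have "\<dots> = w ^ card H * prod (\<lambda>g. g) H" by (simp add: prod.distrib)
  finally have "w ^ card H * prod (\<lambda>g. g) H = 1 * prod (\<lambda>g. g) H" by simp
  moreover have "prod (\<lambda>g. g) H \<noteq> 0"
  proof -
    have "0 \<notin> H" using H_norm by force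
    then show ?thesis using fin by (simp add: prod_zero_iff)
  qed
  ultimately show "w ^ card H = 1" by (metis mult_right_cancel)
qed

lemma circle_subgroup:
  assumes l: "cmod l = 1" and lH: "l \<notin> H"
  shows "\<exists>k\<ge>1. (\<forall>w\<in>H. w ^ k = 1) \<and> l ^ k \<noteq> 1"
proof -
  have fin: "finite H" using H_infinite_full l lH by blast
  define k where "k = card H"
  have k1: "k \<ge> 1" using fin H1 by (auto simp: k_def card_gt_0_iff Suc_le_eq)
  have roots: "\<forall>w\<in>H. w ^ k = 1" using H_finite_roots[OF fin] by (simp add: k_def)
  have sub: "H \<subseteq> {z. z ^ k = 1}" using roots by auto
  have finr: "finite {z::complex. z ^ k = 1}" using k1 by (intro finite_roots_unity) auto
  have "card {z::complex. z ^ k = 1} \<le> k" using k1 by (intro card_roots_unity) auto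
  then have "H = {z. z ^ k = 1}"
    using card_subset_eq[OF finr sub] card_mono[OF finr sub] by (simp add: k_def)
  then have "l ^ k \<noteq> 1" using lH by auto
  then show ?thesis using k1 roots by blast
qed

end

lemma lift_unique:
  fixes g1 g2 :: "'a::topological_space \<Rightarrow> complex"
  assumes S: "connected S" and c1: "continuous_on S g1" and c2: "continuous_on S g2"
    and e: "\<And>t. t \<in> S \<Longrightarrow> exp (g1 t) = exp (g2 t)" and a: "a \<in> S" and b: "b \<in> S"
  shows "g1 b - g1 a = g2 b - g2 a"
proof -
  define h where "h t = g1 t - g2 t" for t
  have ch: "continuous_on S h" unfolding h_def by (intro continuous_intros c1 c2)
  have int: "\<exists>n::int. h t = of_int (2 * n) * pi * \<i>" if t: "t \<in> S" for t
    using e[OF t] unfolding exp_eq h_def by (auto simp: algebra_simps)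
  have "h constant_on S"
  proof (rule continuous_discrete_range_constant[OF S ch])
    fix u assume u: "u \<in> S"
    show "\<exists>e>0. \<forall>y. y \<in> S \<and> h y \<noteq> h u \<longrightarrow> e \<le> norm (h y - h u)"
    proof (intro exI[of _ 1] conjI allI impI)
      fix y assume y: "y \<in> S \<and> h y \<noteq> h u"
      obtain m n :: int where mn: "h y = of_int (2 * m) * pi * \<i>" "h u = of_int (2 * n) * pi * \<i>"
        using int u y by blast
      have "m \<noteq> n" using y mn by auto
      then have "\<bar>real_of_int (m - n)\<bar> \<ge> 1" by linarith
      have eq: "h y - h u = complex_of_real (2 * pi * real_of_int (m - n)) * \<i>"
        using mn by (simp add: algebra_simps)
      have "norm (h y - h u) = 2 * pi * \<bar>real_of_int (m - n)\<bar>"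
        unfolding eq norm_mult norm_of_real by (simp add: abs_mult)
      also have "\<dots> \<ge> 2 * pi * 1" using \<open>\<bar>real_of_int (m - n)\<bar> \<ge> 1\<close> by (intro mult_left_mono) auto
      finally show "1 \<le> norm (h y - h u)" using pi_gt3 by linarith
    qed simp
  qed
  then have "h a = h b" using a b by (auto simp: constant_on_def)
  then show ?thesis by (simp add: h_def algebra_simps)
qed

definition lincr :: "(real \<Rightarrow> complex) \<Rightarrow> complex" where
  "lincr f = (let g = (SOME g. continuous_on {0..1} g \<and> (\<forall>t\<in>{0..1}. f t = exp (g t))) in g 1 - g 0)"

lemma lincr_eq:
  assumes g: "continuous_on {0..1} g" "\<And>t. t \<in> {0..1} \<Longrightarrow> f t = exp (g t)"
  shows "lincr f = g 1 - g 0"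
proof -
  define g' where "g' = (SOME g. continuous_on {0..1} g \<and> (\<forall>t\<in>{0..1}. f t = exp (g t)))"
  have "continuous_on {0..1} g' \<and> (\<forall>t\<in>{0..1}. f t = exp (g' t))"
    unfolding g'_def by (rule someI[of _ g]) (use g in auto)
  then have "g' 1 - g' 0 = g 1 - g 0"
    by (intro lift_unique[of "{0..1::real}"]) (auto simp: g)
  then show ?thesis by (simp add: lincr_def g'_def Let_def)
qed

lemma lift_exists:
  fixes f :: "'a::real_normed_vector \<Rightarrow> complex"
  assumes "convex S" "continuous_on S f" "\<And>t. t \<in> S \<Longrightarrow> f t \<noteq> 0"
  obtains g where "continuous_on S g" "\<And>t. t \<in> S \<Longrightarrow> f t = exp (g t)"
  using continuous_logarithm_on_contractible[OF assms(2) convex_imp_contractible[OF assms(1)] assms(3)]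
  by metis

lemma lincr_exp:
  assumes "continuous_on {0..1} f" "\<And>t. t \<in> {0..1} \<Longrightarrow> f t \<noteq> 0"
  shows "exp (lincr f) = f 1 / f 0"
proof -
  obtain g where g: "continuous_on {0..1} g" "\<And>t. t \<in> {0..1} \<Longrightarrow> f t = exp (g t)"
    using lift_exists[of "{0..1::real}" f] assms by auto
  show ?thesis using lincr_eq[OF g] g(2)[of 0] g(2)[of 1] by (simp add: exp_diff)
qed

lemma lincr_cmult:
  assumes "continuous_on {0..1} f" "\<And>t. t \<in> {0..1} \<Longrightarrow> f t \<noteq> 0" "c \<noteq> 0"
    and "\<And>t. t \<in> {0..1} \<Longrightarrow> f2 t = c * f t"
  shows "lincr f2 = lincr f"
proof -
  obtain g where g: "continuous_on {0..1} g" "\<And>t. t \<in> {0..1} \<Longrightarrow> f t = exp (g t)"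
    using lift_exists[of "{0..1::real}" f] assms by auto
  have "lincr f2 = (Ln c + g 1) - (Ln c + g 0)"
  proof (rule lincr_eq)
    show "continuous_on {0..1} (\<lambda>t. Ln c + g t)" by (intro continuous_intros g(1))
    fix t :: real assume t: "t \<in> {0..1}"
    show "f2 t = exp (Ln c + g t)" using assms(3) assms(4)[OF t] g(2)[OF t] by (simp add: exp_add)
  qed
  also have "\<dots> = lincr f" using lincr_eq[OF g] by simp
  finally show ?thesis .
qed

lemma lincr_small:
  assumes "continuous_on {0..1} f" "\<And>t. t \<in> {0..1} \<Longrightarrow> cmod (f t - 1) < 1"
  shows "lincr f = Ln (f 1) - Ln (f 0)"
proof (rule lincr_eq)
  have nn: "f t \<notin> \<real>\<^sub>\<le>\<^sub>0" if "t \<in> {0..1}" for t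
  proof
    assume "f t \<in> \<real>\<^sub>\<le>\<^sub>0"
    then have "Re (f t) \<le> 0" by (auto simp: nonpos_Reals_def)
    moreover have "\<bar>Re (f t - 1)\<bar> < 1" using assms(2)[OF that] abs_Re_le_cmod[of "f t - 1"] by linarith
    ultimately show False by simp
  qed
  show "continuous_on {0..1} (\<lambda>t. Ln (f t))"
    by (rule continuous_on_Ln'[OF assms(1)]) (use nn in auto)
  fix t :: real assume t: "t \<in> {0..1}"
  have "f t \<noteq> 0" using nn[OF t] by auto
  then show "f t = exp (Ln (f t))" by simp
qed

definition tri :: "(real \<times> real) set" where
  "tri = {p. 0 \<le> fst p \<and> 0 \<le> snd p \<and> fst p + snd p \<le> 1}"

lemma convex_tri: "convex tri"
  unfolding convex_def tri_def
proof (clarsimp)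
  fix a b c d u v :: real
  assume h: "0 \<le> a" "0 \<le> b" "a + b \<le> 1" "0 \<le> c" "0 \<le> d" "c + d \<le> 1" "0 \<le> u" "0 \<le> v" "u + v = 1"
  have "u * (a + b) + v * (c + d) \<le> u * 1 + v * 1"
    using h by (intro add_mono mult_left_mono) auto
  then show "u * a + v * c + (u * b + v * d) \<le> 1" using h by (simp add: algebra_simps)
qed

lemma triangle_lift:
  fixes F :: "real \<times> real \<Rightarrow> complex"
  assumes F: "continuous_on tri F" "\<And>p. p \<in> tri \<Longrightarrow> F p \<noteq> 0"
  shows "lincr (\<lambda>t. F (t, 0)) + lincr (\<lambda>t. F (1 - t, t)) = lincr (\<lambda>t. F (0, t))"
proof -
  obtain g where g: "continuous_on tri g" "\<And>p. p \<in> tri \<Longrightarrow> F p = exp (g p)"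
    using lift_exists[OF convex_tri F] by metis
  have p1: "(\<lambda>t::real. (t, 0::real)) ` {0..1} \<subseteq> tri" by (auto simp: tri_def)
  have p2: "(\<lambda>t::real. (1 - t, t)) ` {0..1} \<subseteq> tri" by (auto simp: tri_def)
  have p3: "(\<lambda>t::real. (0::real, t)) ` {0..1} \<subseteq> tri" by (auto simp: tri_def)
  have l1: "lincr (\<lambda>t. F (t, 0)) = g (1, 0) - g (0, 0)"
  proof (rule lincr_eq[where g="\<lambda>t. g (t, 0)"])
    show "continuous_on {0..1} (\<lambda>t. g (t, 0))"
      by (rule continuous_on_compose2[OF g(1) _ p1]) (intro continuous_intros)
  qed (auto simp: tri_def intro!: g(2))
  have l2: "lincr (\<lambda>t. F (1 - t, t)) = g (1 - 1, 1) - g (1 - 0, 0)"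
  proof (rule lincr_eq[where g="\<lambda>t. g (1 - t, t)"])
    show "continuous_on {0..1} (\<lambda>t. g (1 - t, t))"
      by (rule continuous_on_compose2[OF g(1) _ p2]) (intro continuous_intros)
  qed (auto simp: tri_def intro!: g(2))
  have l3: "lincr (\<lambda>t. F (0, t)) = g (0, 1) - g (0, 0)"
  proof (rule lincr_eq[where g="\<lambda>t. g (0, t)"])
    show "continuous_on {0..1} (\<lambda>t. g (0, t))"
      by (rule continuous_on_compose2[OF g(1) _ p3]) (intro continuous_intros)
  qed (auto simp: tri_def intro!: g(2))
  show ?thesis using l1 l2 l3 by simp
qed


definition cntq :: "nat \<Rightarrow> nat set \<Rightarrow> nat \<Rightarrow> nat" where
  "cntq q A N = card {n\<in>A. n \<le> N ^ q}"

lemma dens_pos_iff: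
  "0 < q_lower_dens q A \<longleftrightarrow> (\<exists>e>0. eventually (\<lambda>N. e \<le> real (cntq q A N) / real N) sequentially)"
proof
  assume "0 < q_lower_dens q A"
  then have h: "ereal 0 < liminf (\<lambda>N::nat. ereal (real (card {n\<in>A. n \<le> N ^ q}) / real N))"
    by (simp add: q_lower_dens_def zero_ereal_def)
  obtain e where e: "0 < e" "ereal e < liminf (\<lambda>N::nat. ereal (real (card {n\<in>A. n \<le> N ^ q}) / real N))"
  proof (cases "liminf (\<lambda>N::nat. ereal (real (card {n\<in>A. n \<le> N ^ q}) / real N))")
    case (real r) then show ?thesis using h that[of "r/2"] by auto
  next
    case PInf then show ?thesis using that[of 1] by auto
  next
    case MInf then show ?thesis using h by auto
  qed
  have "eventually (\<lambda>N. ereal e < ereal (real (card {n\<in>A. n \<le> N ^ q}) / real N)) sequentially"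
    using less_LiminfD[OF e(2)] by simp
  then have "eventually (\<lambda>N. e \<le> real (cntq q A N) / real N) sequentially"
    by (rule eventually_mono) (simp add: cntq_def)
  then show "\<exists>e>0. eventually (\<lambda>N. e \<le> real (cntq q A N) / real N) sequentially" using e by blast
next
  assume "\<exists>e>0. eventually (\<lambda>N. e \<le> real (cntq q A N) / real N) sequentially"
  then obtain e where e: "e > 0" "eventually (\<lambda>N. e \<le> real (cntq q A N) / real N) sequentially" by blast
  have "eventually (\<lambda>N. ereal e \<le> ereal (real (card {n\<in>A. n \<le> N ^ q}) / real N)) sequentially"
    using e(2) by (rule eventually_mono) (simp add: cntq_def)
  then have "ereal e \<le> q_lower_dens q A"
    unfolding q_lower_dens_def by (rule Liminf_bounded)
  then show "0 < q_lower_dens q A" using e(1)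
    by (metis ereal_less(2) order_less_le_trans zero_ereal_def)
qed

lemma dens_transfer:
  fixes g :: "nat \<Rightarrow> nat" and s c :: nat
  assumes A: "0 < q_lower_dens q A"
    and gB: "\<And>n. n \<in> A \<Longrightarrow> g n \<in> B \<and> g n \<le> n + s"
    and fib: "\<And>m. finite {n\<in>A. g n = m} \<and> card {n\<in>A. g n = m} \<le> c"
  shows "0 < q_lower_dens q B"
proof -
  obtain e where e: "e > 0" "eventually (\<lambda>N. e \<le> real (cntq q A N) / real N) sequentially"
    using A dens_pos_iff by blast
  have key: "cntq q A N \<le> c * cntq q B N + (s + 1)" for N
  proof -
    let ?M = "N ^ q"
    have sub: "{n\<in>A. n \<le> ?M} \<subseteq> (\<Union>m\<in>{m\<in>B. m \<le> ?M}. {n\<in>A. g n = m}) \<union> {?M - s..?M}"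
    proof
      fix n assume n: "n \<in> {n\<in>A. n \<le> ?M}"
      show "n \<in> (\<Union>m\<in>{m\<in>B. m \<le> ?M}. {n\<in>A. g n = m}) \<union> {?M - s..?M}"
      proof (cases "n + s \<le> ?M")
        case True then show ?thesis using n gB[of n] by auto
      next
        case False then show ?thesis using n by auto
      qed
    qed
    have fin1: "finite {m\<in>B. m \<le> ?M}" by auto
    have "card (\<Union>m\<in>{m\<in>B. m \<le> ?M}. {n\<in>A. g n = m}) \<le> (\<Sum>m\<in>{m\<in>B. m \<le> ?M}. card {n\<in>A. g n = m})"
      by (rule card_UN_le[OF fin1])
    also have "\<dots> \<le> (\<Sum>m\<in>{m\<in>B. m \<le> ?M}. c)"
      by (rule sum_mono) (use fib in blast)
    also have "\<dots> = c * cntq q B N" by (simp add: cntq_def)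
    finally have c1: "card (\<Union>m\<in>{m\<in>B. m \<le> ?M}. {n\<in>A. g n = m}) \<le> c * cntq q B N" .
    have fin2: "finite (\<Union>m\<in>{m\<in>B. m \<le> ?M}. {n\<in>A. g n = m})" using fib fin1 by blast
    have "cntq q A N \<le> card ((\<Union>m\<in>{m\<in>B. m \<le> ?M}. {n\<in>A. g n = m}) \<union> {?M - s..?M})"
      unfolding cntq_def by (rule card_mono) (use fin2 sub in auto)
    also have "\<dots> \<le> card (\<Union>m\<in>{m\<in>B. m \<le> ?M}. {n\<in>A. g n = m}) + card {?M - s..?M}"
      by (rule card_Un_le)
    also have "card {?M - s..?M} \<le> s + 1" by simp
    finally show ?thesis using c1 by linarith
  qed
  have cpos: "c \<ge> 1 \<or> (\<forall>N. cntq q A N \<le> s + 1)"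
  proof (cases "c = 0")
    case True then show ?thesis using key by simp
  qed simp
  show ?thesis
  proof (cases "c \<ge> 1")
    case False
    then have bnd: "\<And>N. cntq q A N \<le> s + 1" using cpos by auto
    have ev: "eventually (\<lambda>N::nat. real N \<ge> 2 * (real s + 1) / e + 1) sequentially"
    proof -
      obtain N0 :: nat where "real N0 \<ge> 2 * (real s + 1) / e + 1" using real_arch_simple by blast
      then show ?thesis unfolding eventually_sequentially
        by (intro exI[of _ N0]) auto
    qed
    have "eventually (\<lambda>N. False) sequentially"
      using ev e(2)
    proof eventually_elim
      case (elim N)
      have Npos: "real N > 0" using elim(1) e(1)
        by (smt (verit, best) divide_nonneg_pos of_nat_0_le_iff)
      have "e * real N \<le> real (cntq q A N)" using elim(2) Npos by (simp add: field_simps)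
      also have "\<dots> \<le> s + 1" using bnd[of N] by simp
      finally have a1: "e * real N \<le> real s + 1" by simp
      have a2: "e * real N \<ge> e * (2 * (real s + 1) / e + 1)" using elim(1) e(1) by (intro mult_left_mono) auto
      have a3: "e * (2 * (real s + 1) / e + 1) = 2 * (real s+1) + e" using e(1) by (simp add: field_simps)
      have "2 * (real s + 1) + e \<le> real s + 1" using a2 a1 unfolding a3 by (rule order.trans)
      moreover have "real s \<ge> 0" by simp
      ultimately show False using e(1) by (simp add: algebra_simps)
    qed
    then show ?thesis by simp
  next
    case True
    let ?d = "e / (2 * c)"
    have ev: "eventually (\<lambda>N::nat. real N \<ge> 2 * (real s + 1) / e + 1) sequentially"
    proof -
      obtain N0 :: nat where "real N0 \<ge> 2 * (real s + 1) / e + 1" using real_arch_simple by blast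
      then show ?thesis unfolding eventually_sequentially
        by (intro exI[of _ N0]) auto
    qed
    have "eventually (\<lambda>N. ?d \<le> real (cntq q B N) / real N) sequentially"
      using ev e(2)
    proof eventually_elim
      case (elim N)
      have Npos: "real N > 0" using elim(1) e(1)
        by (smt (verit, best) divide_nonneg_pos of_nat_0_le_iff)
      have "e * real N \<le> real (cntq q A N)" using elim(2) Npos by (simp add: field_simps)
      also have "\<dots> \<le> real c * real (cntq q B N) + (s + 1)"
        using key[of N] by (metis of_nat_add of_nat_le_iff of_nat_mult of_nat_1)
      finally have a: "e * real N \<le> real c * real (cntq q B N) + (s + 1)" .
      have b1: "e * real N \<ge> e * (2 * (real s + 1) / e + 1)" using elim(1) e(1) by (intro mult_left_mono) auto
      have b2: "e * (2 * (real s + 1) / e + 1) = 2 * (real s+1) + e" using e(1) by (simp add: field_simps)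
      have b3: "2 * (real s + 1) + e \<le> e * real N" using b1 unfolding b2 .
      have b: "real (s + 1) \<le> e * real N / 2" using b3 e(1) by (simp add: field_simps)
      have "e * real N / 2 \<le> real c * real (cntq q B N)" using a b by simp
      then show ?case using Npos True by (simp add: field_simps)
    qed
    moreover have "?d > 0" using e(1) True by simp
    ultimately show ?thesis using dens_pos_iff by blast
  qed
qed

lemma dens_scale:
  fixes p :: nat
  assumes A: "0 < q_lower_dens q A" and p: "p \<ge> 1" and q: "q \<ge> 1"
    and AB: "\<And>m. m \<in> A \<Longrightarrow> p * m \<in> B"
  shows "0 < q_lower_dens q B"
proof -
  obtain e where e: "e > 0" "eventually (\<lambda>N. e \<le> real (cntq q A N) / real N) sequentially"
    using A dens_pos_iff by blast
  have lim: "filterlim (\<lambda>N::nat. N div p) at_top sequentially"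
    unfolding filterlim_at_top eventually_sequentially
  proof (intro allI exI allI impI)
    fix Z N :: nat assume "p * Z \<le> N"
    then show "Z \<le> N div p" using p by (simp add: less_eq_div_iff_mult_less_eq mult.commute)
  qed
  have e2: "eventually (\<lambda>N. e \<le> real (cntq q A (N div p)) / real (N div p)) sequentially"
    using filterlim_iff[THEN iffD1, OF lim, rule_format, OF e(2)] by simp
  have key: "cntq q A (N div p) \<le> cntq q B N" for N
  proof -
    have "(\<lambda>m. p * m) ` {m\<in>A. m \<le> (N div p) ^ q} \<subseteq> {n\<in>B. n \<le> N ^ q}"
    proof
      fix n assume "n \<in> (\<lambda>m. p * m) ` {m\<in>A. m \<le> (N div p) ^ q}"
      then obtain m where m: "m \<in> A" "m \<le> (N div p) ^ q" "n = p * m" by auto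
      have "p * m \<le> p * (N div p) ^ q" using m by simp
      also have "\<dots> \<le> p ^ q * (N div p) ^ q"
        using p q by (intro mult_right_mono) (auto intro: self_le_power)
      also have "\<dots> = (p * (N div p)) ^ q" by (simp add: power_mult_distrib)
      also have "\<dots> \<le> N ^ q" by (intro power_mono) (auto simp: mult.commute)
      finally show "n \<in> {n\<in>B. n \<le> N ^ q}" using m AB by auto
    qed
    moreover have "inj_on (\<lambda>m. p * m) {m\<in>A. m \<le> (N div p) ^ q}" using p by (auto simp: inj_on_def)
    ultimately show ?thesis unfolding cntq_def
      by (metis (no_types, lifting) card_image card_mono finite_nat_set_iff_bounded_le mem_Collect_eq)
  qed
  have ev: "eventually (\<lambda>N::nat. N \<ge> 2 * p) sequentially" by (rule eventually_ge_at_top)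
  have "eventually (\<lambda>N. e / (2 * p) \<le> real (cntq q B N) / real N) sequentially"
    using ev e2
  proof eventually_elim
    case (elim N)
    have dp: "N div p \<ge> 2" using elim(1) p
      by (simp add: less_eq_div_iff_mult_less_eq mult.commute)
    have r1: "real (N div p) \<ge> real N / real p - 1"
    proof -
      have "N mod p < p" using p by simp
      moreover have "N = p * (N div p) + N mod p" by simp
      ultimately have "N < p * (N div p) + p" by linarith
      then have "real N \<le> real p * real (N div p) + real p" by (metis of_nat_add of_nat_less_iff of_nat_mult less_imp_le)
      then show ?thesis using p by (simp add: field_simps)
    qed
    have r2: "real N / real p - 1 \<ge> real N / (2 * real p)"
    proof -
      have "real N \<ge> 2 * real p" using elim(1) by linarith
      then show ?thesis using p by (simp add: field_simps)
    qed
    have "e * real (N div p) \<le> real (cntq q A (N div p))" using elim(2) dp by (simp add: field_simps)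
    also have "\<dots> \<le> real (cntq q B N)" using key by simp
    finally have "e * (real N / (2 * real p)) \<le> real (cntq q B N)"
      using r1 r2 e(1) by (meson mult_left_mono order.trans less_imp_le)
    then show ?case using p elim(1) by (simp add: field_simps)
  qed
  moreover have "e / (2 * p) > 0" using e(1) p by simp
  ultimately show ?thesis using dens_pos_iff by blast
qed


locale lm = tvs sc for sc :: "complex \<Rightarrow> 'a::{ab_group_add,topological_space} \<Rightarrow> 'a" +
  fixes T :: "'a \<Rightarrow> 'a" and x :: 'a and lam :: complex
  assumes T: "clo T" and dense: "closure (range (\<lambda>n. (T ^^ n) x)) = UNIV" and lam: "cmod lam = 1"
begin

definition Om :: "('a \<times> complex) set" where
  "Om = closure (range (\<lambda>n. ((T ^^ n) x, lam ^ n)))"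

lemma orb_sphere:
  assumes "(z, \<nu>) \<in> closure (range (\<lambda>n. (u n, lam ^ n)))"
  shows "cmod \<nu> = 1"
proof -
  have "range (\<lambda>n. (u n, lam ^ n)) \<subseteq> UNIV \<times> sphere 0 1" using lam by (auto simp: norm_power)
  moreover have "closed (UNIV \<times> sphere (0::complex) 1)" by (intro closed_Times closed_sphere) simp
  ultimately have "closure (range (\<lambda>n. (u n, lam ^ n))) \<subseteq> UNIV \<times> sphere 0 1"
    by (rule closure_minimal)
  then show ?thesis using assms by auto
qed

lemma Om_sphere: "(y, \<mu>) \<in> Om \<Longrightarrow> cmod \<mu> = 1"
  unfolding Om_def by (rule orb_sphere)

lemma cT: "continuous_on S T" by (rule clo_cont[OF T])

lemma Om_step: assumes "(z, \<mu>) \<in> Om" shows "(T z, lam * \<mu>) \<in> Om"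
proof -
  let ?S = "\<lambda>w::'a \<times> complex. (T (fst w), lam * snd w)"
  have "?S ` Om \<subseteq> Om" unfolding Om_def
  proof (rule image_closure_subset)
    have "continuous_on (closure (range (\<lambda>n. ((T ^^ n) x, lam ^ n)))) (\<lambda>w. T (fst w))"
      by (rule continuous_on_compose2[OF cT continuous_on_fst[OF continuous_on_id]]) auto
    then show "continuous_on (closure (range (\<lambda>n. ((T ^^ n) x, lam ^ n)))) ?S"
      by (intro continuous_on_Pair continuous_intros)
    show "?S ` range (\<lambda>n. ((T ^^ n) x, lam ^ n)) \<subseteq> closure (range (\<lambda>n. ((T ^^ n) x, lam ^ n)))"
    proof clarsimp
      fix n
      have "(T ((T ^^ n) x), lam * lam ^ n) = ((T ^^ Suc n) x, lam ^ Suc n)" by simp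
      then show "(T ((T ^^ n) x), lam * lam ^ n) \<in> closure (range (\<lambda>n. ((T ^^ n) x, lam ^ n)))"
        by (metis (no_types, lifting) closure_subset rangeI subsetD)
    qed
  qed simp
  then show ?thesis using assms by force
qed

lemma Om_iter: "(z, \<mu>) \<in> Om \<Longrightarrow> ((T ^^ n) z, lam ^ n * \<mu>) \<in> Om"
proof (induction n)
  case (Suc n)
  then have "(T ((T ^^ n) z), lam * (lam ^ n * \<mu>)) \<in> Om" by (intro Om_step) auto
  then show ?case by (simp add: mult.assoc)
qed simp

lemma Om_rot_gen:
  assumes it: "\<And>n. ((T ^^ n) y, lam ^ n * w) \<in> Om"
    and z: "(z, \<nu>) \<in> closure (range (\<lambda>n. ((T ^^ n) y, lam ^ n)))"
  shows "(z, \<nu> * w) \<in> Om"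
proof -
  let ?R = "\<lambda>p::'a \<times> complex. (fst p, snd p * w)"
  have "?R ` closure (range (\<lambda>n. ((T ^^ n) y, lam ^ n))) \<subseteq> Om"
  proof (rule image_closure_subset)
    show "continuous_on (closure (range (\<lambda>n. ((T ^^ n) y, lam ^ n)))) ?R"
      by (intro continuous_intros)
    show "closed Om" by (simp add: Om_def)
    show "?R ` range (\<lambda>n. ((T ^^ n) y, lam ^ n)) \<subseteq> Om" using it by auto
  qed
  then show ?thesis using z by force
qed

lemma Om_rot: "(x, w) \<in> Om \<Longrightarrow> (z, \<nu>) \<in> Om \<Longrightarrow> (z, \<nu> * w) \<in> Om"
  using Om_rot_gen[of x w z \<nu>] Om_iter[of x w] unfolding Om_def by blast

lemma fiber_exists:
  fixes u :: "nat \<Rightarrow> 'a"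
  assumes du: "closure (range u) = UNIV"
  shows "\<exists>\<mu>. (y, \<mu>) \<in> closure (range (\<lambda>n. (u n, lam ^ n)))"
proof (rule ccontr)
  let ?C = "closure (range (\<lambda>n. (u n, lam ^ n)))"
  assume "\<not> ?thesis"
  then have sub: "{y} \<times> sphere 0 1 \<subseteq> - ?C" by blast
  have op: "open (- ?C)" by auto
  obtain X0 where X0: "y \<in> X0" "open X0" "X0 \<times> sphere 0 1 \<subseteq> - ?C"
    using Elementary_Topology.tube_lemma[OF compact_sphere op sub] by auto
  have "range u \<inter> X0 \<noteq> {}" using dense_meets[OF du X0(2)] X0(1) by blast
  then obtain n where n: "u n \<in> X0" by blast
  have "lam ^ n \<in> sphere 0 1" using lam by (simp add: norm_power)
  then have "(u n, lam ^ n) \<in> X0 \<times> sphere 0 1" using n by simp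
  then have "(u n, lam ^ n) \<in> - ?C" by (rule subsetD[OF X0(3)])
  moreover have "(u n, lam ^ n) \<in> ?C" by (rule closure_subset[THEN subsetD]) simp
  ultimately show False by simp
qed

lemma Om_fiber: "\<exists>\<mu>. (y, \<mu>) \<in> Om"
  unfolding Om_def by (rule fiber_exists[OF dense])

definition good :: "'a \<Rightarrow> bool" where
  "good y \<longleftrightarrow> (\<exists>\<nu>. (x, \<nu>) \<in> closure (range (\<lambda>n. ((T ^^ n) y, lam ^ n))))"

lemma good_Om:
  assumes g: "good y"
  obtains \<nu> where "\<nu> \<noteq> 0" "\<And>\<mu>. (y, \<mu>) \<in> Om \<Longrightarrow> (x, \<nu> * \<mu>) \<in> Om"
proof -
  obtain \<nu> where \<nu>: "(x, \<nu>) \<in> closure (range (\<lambda>n. ((T ^^ n) y, lam ^ n)))"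
    using g good_def by blast
  have "\<nu> \<noteq> 0" using orb_sphere[OF \<nu>] by auto
  moreover have "(x, \<nu> * \<mu>) \<in> Om" if "(y, \<mu>) \<in> Om" for \<mu>
    by (rule Om_rot_gen[OF Om_iter[OF that] \<nu>])
  ultimately show ?thesis using that by blast
qed

lemma opoly_funpow: "opoly T p ((T ^^ n) y) = (T ^^ n) (opoly T p y)"
  by (induction n) (auto simp: opoly_comm[OF T])

lemma good_opoly: assumes p: "p \<noteq> 0" shows "good (opoly T p x)"
proof -
  have "closure (range (\<lambda>n. opoly T p ((T ^^ n) x))) = UNIV"
    by (rule dense_comp[OF opoly_dense[OF T dense p] dense clo_cont[OF clo_opoly[OF T]]])
  then have "closure (range (\<lambda>n. (T ^^ n) (opoly T p x))) = UNIV"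
    by (simp add: opoly_funpow)
  from fiber_exists[OF this, of x] show ?thesis unfolding good_def by blast
qed

lemma opoly_add: "opoly T (p + q) y = opoly T p y + opoly T q y"
proof -
  define N where "N = max (degree p) (degree q)"
  have "degree (p + q) \<le> N" unfolding N_def by (rule degree_add_le) auto
  then have "opoly T (p + q) y = (\<Sum>i\<le>N. sc (coeff (p + q) i) ((T ^^ i) y))" by (rule opoly_upto)
  also have "\<dots> = (\<Sum>i\<le>N. sc (coeff p i) ((T ^^ i) y)) + (\<Sum>i\<le>N. sc (coeff q i) ((T ^^ i) y))"
    by (simp add: scale_left_distrib sum.distrib)
  also have "\<dots> = opoly T p y + opoly T q y"
  proof -
    have "opoly T p y = (\<Sum>i\<le>N. sc (coeff p i) ((T ^^ i) y))" by (rule opoly_upto) (simp add: N_def)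
    moreover have "opoly T q y = (\<Sum>i\<le>N. sc (coeff q i) ((T ^^ i) y))" by (rule opoly_upto) (simp add: N_def)
    ultimately show ?thesis by simp
  qed
  finally show ?thesis .
qed

lemma opoly_monom: "opoly T (monom a n) y = sc a ((T ^^ n) y)"
proof -
  have "opoly T (monom a n) y = (\<Sum>i\<le>n. sc (coeff (monom a n) i) ((T ^^ i) y))"
    by (rule opoly_upto) (simp add: degree_monom_le)
  also have "\<dots> = sc a ((T ^^ n) y)"
    by (subst sum.remove[of _ n]) (auto simp: coeff_monom intro!: sum.neutral)
  finally show ?thesis .
qed

definition Y :: "nat \<Rightarrow> real \<times> real \<Rightarrow> 'a" where
  "Y j p = sc (of_real (1 - fst p - snd p)) x + sc (of_real (fst p)) ((T ^^ j) x)
           + sc (of_real (snd p)) ((T ^^ Suc j) x)"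

lemma good_Y:
  assumes j: "j \<ge> 1" and p: "p \<in> tri"
  shows "good (Y j p)"
proof -
  define P where "P = monom (complex_of_real (1 - fst p - snd p)) 0 + monom (of_real (fst p)) j
    + monom (of_real (snd p)) (Suc j)"
  have "Y j p = opoly T P x"
    by (simp add: P_def opoly_add opoly_monom Y_def)
  moreover have "P \<noteq> 0"
  proof
    assume P0: "P = 0"
    have "coeff P 0 = of_real (1 - fst p - snd p)" using j by (simp add: P_def coeff_monom)
    moreover have "coeff P j = of_real (fst p)" using j by (simp add: P_def coeff_monom)
    moreover have "coeff P (Suc j) = of_real (snd p)" using j by (simp add: P_def coeff_monom)
    ultimately show False using P0 by simp
  qed
  ultimately show ?thesis using good_opoly by simp
qed

lemma cont_Y: "continuous_on S (Y j)"
  unfolding Y_def by (intro cont_add cont_sc continuous_intros)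

end

context lm
begin

lemma G0_closed: "closed {w. (x, w) \<in> Om}"
proof -
  have "closed ((\<lambda>w. (x, w)) -` Om)"
    by (rule continuous_closed_vimage) (auto simp: Om_def intro!: continuous_intros)
  then show ?thesis by (simp add: vimage_def)
qed

lemma x1_Om: "(x, 1) \<in> Om"
proof -
  have "((T ^^ 0) x, lam ^ 0) \<in> range (\<lambda>n. ((T ^^ n) x, lam ^ n))" by (rule rangeI)
  then show ?thesis unfolding Om_def using closure_subset by fastforce
qed

definition PhiK :: "nat \<Rightarrow> 'a \<Rightarrow> complex" where
  "PhiK k y = (SOME \<mu>. (y, \<mu>) \<in> Om) ^ k"

lemma PhiK_some: "(y, SOME \<mu>. (y, \<mu>) \<in> Om) \<in> Om"
  using someI_ex[OF Om_fiber[of y]] .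

lemma PhiK_norm: "cmod (PhiK k y) = 1"
  unfolding PhiK_def using Om_sphere[OF PhiK_some] by (simp add: norm_power)

lemma PhiK_good:
  assumes kG: "\<And>w. (x, w) \<in> Om \<Longrightarrow> w ^ k = 1" and g: "good y" and m: "(y, \<mu>) \<in> Om"
  shows "PhiK k y = \<mu> ^ k"
proof -
  obtain \<nu> where \<nu>: "\<nu> \<noteq> 0" "\<And>\<mu>. (y, \<mu>) \<in> Om \<Longrightarrow> (x, \<nu> * \<mu>) \<in> Om"
    using good_Om[OF g] by blast
  define \<mu>0 where "\<mu>0 = (SOME \<mu>. (y, \<mu>) \<in> Om)"
  have m0: "(y, \<mu>0) \<in> Om" unfolding \<mu>0_def by (rule PhiK_some)
  have "(\<nu> * \<mu>) ^ k = 1" by (rule kG[OF \<nu>(2)[OF m]])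
  moreover have "(\<nu> * \<mu>0) ^ k = 1" by (rule kG[OF \<nu>(2)[OF m0]])
  ultimately have "\<nu> ^ k * \<mu> ^ k = \<nu> ^ k * \<mu>0 ^ k" by (simp add: power_mult_distrib)
  then have "\<mu> ^ k = \<mu>0 ^ k" using \<nu>(1) by simp
  then show ?thesis by (simp add: PhiK_def \<mu>0_def)
qed

lemma PhiK_cont:
  assumes kG: "\<And>w. (x, w) \<in> Om \<Longrightarrow> w ^ k = 1" and g: "good y0" and e: "e > 0"
  shows "\<exists>W. open W \<and> y0 \<in> W \<and> (\<forall>y\<in>W. cmod (PhiK k y - PhiK k y0) < e)"
proof -
  define C where "C = sphere (0::complex) 1 \<inter> {\<mu>. e \<le> cmod (\<mu> ^ k - PhiK k y0)}"
  have cC: "compact C" unfolding C_def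
    by (intro compact_Int_closed compact_sphere closed_Collect_le continuous_intros)
  have "{y0} \<times> C \<subseteq> - Om"
  proof clarsimp
    fix \<mu> assume "\<mu> \<in> C" "(y0, \<mu>) \<in> Om"
    then have "PhiK k y0 = \<mu> ^ k" "e \<le> cmod (\<mu> ^ k - PhiK k y0)"
      using PhiK_good[OF kG g] by (auto simp: C_def)
    then show False using e by simp
  qed
  moreover have "open (- Om)" unfolding Om_def by (rule open_Compl, rule closed_closure)
  ultimately obtain W where W: "y0 \<in> W" "open W" "W \<times> C \<subseteq> - Om"
    using Elementary_Topology.tube_lemma[OF cC] by metis
  show ?thesis
  proof (intro exI conjI ballI)
    fix y assume y: "y \<in> W"
    define \<mu>0 where "\<mu>0 = (SOME \<mu>. (y, \<mu>) \<in> Om)"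
    have m0: "(y, \<mu>0) \<in> Om" unfolding \<mu>0_def by (rule PhiK_some)
    have n0: "\<mu>0 \<in> sphere 0 1" using Om_sphere[OF m0] by simp
    show "cmod (PhiK k y - PhiK k y0) < e"
    proof (rule ccontr)
      assume "\<not> cmod (PhiK k y - PhiK k y0) < e"
      then have "\<mu>0 \<in> C" using n0 by (simp add: C_def PhiK_def \<mu>0_def)
      then have "(y, \<mu>0) \<in> - Om" using W(3) y by blast
      then show False using m0 by simp
    qed
  qed (use W in auto)
qed

lemma PhiK_T:
  assumes kG: "\<And>w. (x, w) \<in> Om \<Longrightarrow> w ^ k = 1" and g: "good ((T ^^ j) y)"
  shows "PhiK k ((T ^^ j) y) = (lam ^ j) ^ k * PhiK k y"
proof -
  define \<mu>0 where "\<mu>0 = (SOME \<mu>. (y, \<mu>) \<in> Om)"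
  have m0: "(y, \<mu>0) \<in> Om" unfolding \<mu>0_def by (rule PhiK_some)
  have "PhiK k ((T ^^ j) y) = (lam ^ j * \<mu>0) ^ k"
    by (rule PhiK_good[OF kG g Om_iter[OF m0]])
  then show ?thesis by (simp add: PhiK_def \<mu>0_def power_mult_distrib)
qed

lemma PhiK_cont_on:
  fixes h :: "'b::topological_space \<Rightarrow> 'a"
  assumes kG: "\<And>w. (x, w) \<in> Om \<Longrightarrow> w ^ k = 1" and h: "continuous_on UNIV h"
    and g: "\<And>p. p \<in> S \<Longrightarrow> good (h p)"
  shows "continuous_on S (\<lambda>p. PhiK k (h p))"
  unfolding continuous_on_topological
proof (intro ballI allI impI)
  fix p B assume p: "p \<in> S" and B: "open B" "PhiK k (h p) \<in> B"
  obtain e where e: "e > 0" "ball (PhiK k (h p)) e \<subseteq> B" using B openE by metis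
  obtain W where W: "open W" "h p \<in> W" "\<And>y. y \<in> W \<Longrightarrow> cmod (PhiK k y - PhiK k (h p)) < e"
    using PhiK_cont[OF kG g[OF p] e(1)] by blast
  have "open (h -` W)"
    using continuous_on_open_vimage[OF open_UNIV, THEN iffD1, rule_format, OF h W(1)] by simp
  moreover have "p \<in> h -` W" using W(2) by simp
  moreover have "PhiK k (h q) \<in> B" if "q \<in> S" "q \<in> h -` W" for q
  proof -
    have "cmod (PhiK k (h q) - PhiK k (h p)) < e" using W(3) that by simp
    then have "PhiK k (h q) \<in> ball (PhiK k (h p)) e" by (simp add: dist_norm norm_minus_commute)
    then show ?thesis using e(2) by blast
  qed
  ultimately show "\<exists>A. open A \<and> p \<in> A \<and> (\<forall>q\<in>S. q \<in> A \<longrightarrow> PhiK k (h q) \<in> B)" by blast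
qed

lemma funpow_x: "(T ^^ j) ((T ^^ i) z) = (T ^^ (j + i)) z"
  by (simp add: funpow_add)

lemma Y_shift: "Y j (0, t) = Y (Suc j) (t, 0)"
  by (simp add: Y_def)

lemma Y_T:
  "Y j (1 - t, t) = (T ^^ j) (Y 1 (t, 0))"
proof -
  have Tj: "clo (T ^^ j)" by (rule clo_funpow[OF T])
  show ?thesis
    by (simp add: Y_def clo_add[OF Tj] clo_sc[OF Tj] funpow_x funpow_swap1)
qed

lemma dense_Suc: "closure (range (\<lambda>n. (T ^^ Suc n) x)) = UNIV"
proof -
  have "closure (range (\<lambda>y. T y - sc 0 y)) = UNIV" by (rule dense_range_shift[OF T dense])
  then have dT: "closure (range T) = UNIV" by simp
  have "closure (range (\<lambda>n. T ((T ^^ n) x))) = UNIV"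
    by (rule dense_comp[OF dT dense cT])
  then show ?thesis by simp
qed

theorem lam_in: "(x, lam) \<in> Om"
proof (rule ccontr)
  assume nl: "(x, lam) \<notin> Om"
  define G0 where "G0 = {w. (x, w) \<in> Om}"
  have G0c: "closed G0" unfolding G0_def by (rule G0_closed)
  have G0s: "G0 \<subseteq> sphere 0 1" unfolding G0_def using Om_sphere by auto
  have G01: "1 \<in> G0" unfolding G0_def using x1_Om by simp
  have G0m: "a * b \<in> G0" if "a \<in> G0" "b \<in> G0" for a b
    using Om_rot[of a x b] that by (simp add: G0_def mult.commute)
  have "lam \<notin> G0" using nl by (simp add: G0_def)
  then obtain k where k: "k \<ge> 1" "\<forall>w\<in>G0. w ^ k = 1" "lam ^ k \<noteq> 1"
    using circle_subgroup[OF G0c G0s G01 G0m lam] by blast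
  have kG: "\<And>w. (x, w) \<in> Om \<Longrightarrow> w ^ k = 1" using k(2) by (simp add: G0_def)
  define F where "F j p = PhiK k (Y j p)" for j p
  have Fc: "continuous_on tri (F j)" if "j \<ge> 1" for j
    unfolding F_def by (rule PhiK_cont_on[OF kG cont_Y good_Y[OF that]])
  have Fnz: "F j p \<noteq> 0" for j p
    using PhiK_norm[of k "Y j p"] by (auto simp: F_def)
  have path1: "continuous_on {0..1} (\<lambda>t. F j (t, 0))" if "j \<ge> 1" for j
    by (rule continuous_on_compose2[OF Fc[OF that]]) (auto simp: tri_def intro!: continuous_intros)
  define L where "L j = lincr (\<lambda>t. F j (t, 0))" for j
  have stepL: "L (Suc j) = L j + L 1" if j: "j \<ge> 1" for j
  proof -
    have tri: "lincr (\<lambda>t. F j (t, 0)) + lincr (\<lambda>t. F j (1 - t, t)) = lincr (\<lambda>t. F j (0, t))"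
      by (rule triangle_lift[OF Fc[OF j]]) (rule Fnz)
    have e1: "lincr (\<lambda>t. F j (0, t)) = L (Suc j)"
      unfolding L_def F_def Y_shift ..
    have e2: "lincr (\<lambda>t. F j (1 - t, t)) = L 1"
      unfolding L_def
    proof (rule lincr_cmult[OF path1[of 1]])
      show "(lam ^ j) ^ k \<noteq> 0" using lam by auto
      fix t :: real assume t: "t \<in> {0..1}"
      have "good (Y j (1 - t, t))" by (rule good_Y[OF j]) (use t in \<open>auto simp: tri_def\<close>)
      then have "good ((T ^^ j) (Y 1 (t, 0)))" by (simp add: Y_T)
      from PhiK_T[OF kG this] show "F j (1 - t, t) = (lam ^ j) ^ k * F 1 (t, 0)"
        by (simp add: F_def Y_T)
    qed (auto simp: Fnz)
    show ?thesis using tri e1 e2 by (simp add: L_def)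
  qed
  have Ln: "L n = of_nat n * L 1" if "n \<ge> 1" for n
    using that
  proof (induction n rule: dec_induct)
    case (step n)
    then show ?case using stepL[of n] by (simp add: algebra_simps)
  qed simp
  have good_x: "good x"
  proof -
    have "good (Y 1 (0, 0))" by (rule good_Y) (auto simp: tri_def)
    then show ?thesis by (simp add: Y_def)
  qed
  have good_Tx: "good (T x)"
  proof -
    have "good (Y 1 (1, 0))" by (rule good_Y) (auto simp: tri_def)
    then show ?thesis by (simp add: Y_def)
  qed
  have Phix: "PhiK k x = 1" using PhiK_good[OF kG good_x x1_Om] by simp
  have PhiTx: "PhiK k (T x) = lam ^ k"
    using PhiK_good[OF kG good_Tx Om_step[OF x1_Om]] by simp
  have "exp (L 1) = F 1 (1, 0) / F 1 (0, 0)"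
    unfolding L_def by (rule lincr_exp[OF path1]) (auto simp: Fnz)
  also have "\<dots> = lam ^ k" by (simp add: F_def Y_def Phix PhiTx)
  finally have "exp (L 1) \<noteq> 1" using k(3) by simp
  then have L10: "L 1 \<noteq> 0" by auto
  define r where "r = cmod (L 1) / 2"
  have r0: "r > 0" using L10 by (simp add: r_def)
  have "isCont Ln 1" by (rule continuous_at_Ln) (auto simp: nonpos_Reals_def)
  then have "Ln \<midarrow>1\<rightarrow> 0" by (simp add: isCont_def)
  then obtain d where d: "d > 0" "\<And>w. w \<noteq> 1 \<and> norm (w - 1) < d \<Longrightarrow> norm (Ln w - 0) < r"
    using LIM_D[OF _ r0] by metis
  define \<eta> where "\<eta> = min d 1"
  have \<eta>: "\<eta> > 0" "\<eta> \<le> 1" "\<eta> \<le> d" using d by (auto simp: \<eta>_def)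
  have Lnsmall: "cmod (Ln w) < r" if "cmod (w - 1) < \<eta>" for w
  proof (cases "w = 1")
    case True then show ?thesis using r0 by simp
  next
    case False then show ?thesis using d(2)[of w] that \<eta> by simp
  qed
  obtain W where W: "open W" "x \<in> W" "\<And>y. y \<in> W \<Longrightarrow> cmod (PhiK k y - PhiK k x) < \<eta>"
    using PhiK_cont[OF kG good_x \<eta>(1)] by blast
  define Q where "Q p = sc (of_real (1 - snd p)) x + sc (of_real (snd p)) (fst p)" for p :: "'a \<times> real"
  have cQ: "continuous_on UNIV Q" unfolding Q_def by (intro cont_add cont_sc continuous_intros)
  have oQ: "open (Q -` W)"
    using continuous_on_open_vimage[OF open_UNIV, THEN iffD1, rule_format, OF cQ W(1)] by simp
  have "{x} \<times> {0..1} \<subseteq> Q -` W"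
  proof clarsimp
    fix t :: real
    have "Q (x, t) = x" by (simp add: Q_def scale_left_distrib[symmetric])
    then show "Q (x, t) \<in> W" using W(2) by simp
  qed
  then obtain V where V: "x \<in> V" "open V" "V \<times> {0..1} \<subseteq> Q -` W"
    using Elementary_Topology.tube_lemma[OF compact_Icc oQ] by metis
  obtain n where n: "(T ^^ Suc n) x \<in> V"
    using dense_meets[OF dense_Suc V(2)] V(1) by blast
  define N where "N = Suc n"
  have N1: "N \<ge> 1" by (simp add: N_def)
  have near: "cmod (F N (t, 0) - 1) < 1" "cmod (F N (t, 0) - 1) < \<eta>" if t: "t \<in> {0..1}" for t
  proof -
    have "((T ^^ N) x, t) \<in> V \<times> {0..1}" using n t by (simp add: N_def)
    then have "Q ((T ^^ N) x, t) \<in> W" using V(3) by blast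
    moreover have "Q ((T ^^ N) x, t) = Y N (t, 0)" by (simp add: Q_def Y_def)
    ultimately have "cmod (F N (t, 0) - 1) < \<eta>" using W(3) Phix by (simp add: F_def)
    then show "cmod (F N (t, 0) - 1) < 1" "cmod (F N (t, 0) - 1) < \<eta>" using \<eta> by auto
  qed
  have "L N = Ln (F N (1, 0)) - Ln (F N (0, 0))"
    unfolding L_def by (rule lincr_small[OF path1[OF N1] near(1)])
  moreover have "cmod (Ln (F N (1, 0))) < r" using Lnsmall[OF near(2)[of 1]] by simp
  moreover have "cmod (Ln (F N (0, 0))) < r" using Lnsmall[OF near(2)[of 0]] by simp
  ultimately have "cmod (L N) < r + r"
    using norm_triangle_ineq4[of "Ln (F N (1, 0))" "Ln (F N (0, 0))"] by simp
  also have "\<dots> = cmod (L 1)" by (simp add: r_def)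
  finally have a: "cmod (L N) < cmod (L 1)" .
  have "cmod (L N) = real N * cmod (L 1)" using Ln[OF N1] by (simp add: norm_mult)
  also have "\<dots> \<ge> 1 * cmod (L 1)" using N1 by (intro mult_right_mono) auto
  finally show False using a by simp
qed

end

context lm
begin

lemma G0_pow: "(x, lam ^ n) \<in> Om"
proof (induction n)
  case 0 then show ?case using x1_Om by simp
next
  case (Suc n)
  have "(x, lam ^ n * lam) \<in> Om" by (rule Om_rot[OF lam_in Suc])
  then show ?case by (simp add: mult.commute)
qed

lemma all_powers: "(y, lam ^ n) \<in> Om"
proof -
  define G0 where "G0 = {w. (x, w) \<in> Om}"
  have G0c: "closed G0" unfolding G0_def by (rule G0_closed)
  have G0s: "G0 \<subseteq> sphere 0 1" unfolding G0_def using Om_sphere by auto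
  have G01: "1 \<in> G0" unfolding G0_def using x1_Om by simp
  have G0m: "a * b \<in> G0" if "a \<in> G0" "b \<in> G0" for a b
    using Om_rot[of a x b] that by (simp add: G0_def mult.commute)
  obtain \<mu> where m: "(y, \<mu>) \<in> Om" using Om_fiber by blast
  have "Om \<subseteq> UNIV \<times> G0"
    unfolding Om_def
  proof (rule closure_minimal)
    show "range (\<lambda>n. ((T ^^ n) x, lam ^ n)) \<subseteq> UNIV \<times> G0" using G0_pow by (auto simp: G0_def)
    show "closed (UNIV \<times> G0)" using G0c by (intro closed_Times) auto
  qed
  then have mu: "\<mu> \<in> G0" using m by auto
  have "inverse \<mu> \<in> G0" by (rule H_inv[OF G0c G0s G01 G0m mu])
  then have "inverse \<mu> * lam ^ n \<in> G0" using G0m G0_pow by (simp add: G0_def)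
  then have "(y, \<mu> * (inverse \<mu> * lam ^ n)) \<in> Om" using Om_rot[OF _ m] by (simp add: G0_def)
  moreover have "\<mu> \<noteq> 0" using Om_sphere[OF m] by auto
  ultimately show ?thesis by (simp add: mult.assoc[symmetric])
qed

lemma Om_meets:
  assumes "open Op" "(y, \<mu>) \<in> Om" "(y, \<mu>) \<in> Op"
  shows "\<exists>s. ((T ^^ s) x, lam ^ s) \<in> Op"
proof -
  have "Op \<inter> Om \<noteq> {}" using assms by blast
  then have "Op \<inter> range (\<lambda>n. ((T ^^ n) x, lam ^ n)) \<noteq> {}"
    unfolding Om_def using open_Int_closure_eq_empty[OF assms(1)] by blast
  then show ?thesis by blast
qed

lemma rot_visit:
  assumes phi: "cmod \<phi> = 1" and U: "open U" "y0 \<in> U"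
  shows "\<exists>s. sc (\<phi> * lam ^ s) ((T ^^ s) x) \<in> U"
proof -
  define Op where "Op = (\<lambda>p::'a \<times> complex. sc (\<phi> * snd p) (fst p)) -` U"
  have "continuous_on UNIV (\<lambda>p::'a \<times> complex. sc (\<phi> * snd p) (fst p))"
    by (intro cont_sc continuous_intros)
  then have oO: "open Op" unfolding Op_def
    using continuous_on_open_vimage[OF open_UNIV, THEN iffD1, rule_format, OF _ U(1)] by simp
  have p0: "\<phi> \<noteq> 0" using phi by auto
  have "(sc (inverse \<phi>) y0, 1) \<in> Op" using U(2) p0 by (simp add: Op_def)
  moreover have "(sc (inverse \<phi>) y0, 1) \<in> Om" using all_powers[of _ 0] by simp
  ultimately obtain s where "((T ^^ s) x, lam ^ s) \<in> Op" using Om_meets[OF oO] by blast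
  then show ?thesis by (auto simp: Op_def)
qed

lemma pow_visit:
  assumes p: "p \<ge> 1" and lp: "lam ^ p = 1" and U: "open U" "y0 \<in> U"
  shows "\<exists>s. (T ^^ s) x \<in> U \<and> lam ^ s = lam ^ r"
proof -
  define R where "R = {z::complex. z ^ p = 1}"
  have fR: "finite R" unfolding R_def using p by (intro finite_roots_unity) auto
  define Op where "Op = U \<times> (- (R - {lam ^ r}))"
  have oO: "open Op" unfolding Op_def using fR U(1)
    by (intro open_Times open_Compl finite_imp_closed) auto
  have "(y0, lam ^ r) \<in> Op" using U(2) by (simp add: Op_def)
  moreover have "(y0, lam ^ r) \<in> Om" by (rule all_powers)
  ultimately obtain s where s: "((T ^^ s) x, lam ^ s) \<in> Op" using Om_meets[OF oO] by blast
  have "lam ^ s \<in> R" unfolding R_def using lp by (simp add: power_mult[symmetric] mult.commute power_mult)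
  then show ?thesis using s by (auto simp: Op_def)
qed

end

context tvs
begin

lemma clo_of: "cont_lin_op sc T \<Longrightarrow> clo T"
proof -
  assume a: "cont_lin_op sc T"
  then have lin: "Vector_Spaces.linear sc sc T" and c: "continuous_on UNIV T"
    by (simp_all add: cont_lin_op_def)
  interpret L: Vector_Spaces.linear sc sc T by (rule lin)
  show "clo T" using c by (simp add: clo_def L.add L.scale)
qed

lemma dens_empty: "\<not> 0 < q_lower_dens q {}"
proof
  assume "0 < q_lower_dens q {}"
  then obtain e where e: "e > 0" "eventually (\<lambda>N. e \<le> real (cntq q {} N) / real N) sequentially"
    using dens_pos_iff by blast
  have "eventually (\<lambda>N. False) sequentially" using e(2) by (rule eventually_mono) (use e(1) in \<open>simp add: cntq_def\<close>)
  then show False by simp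
qed

lemma qFHC_dense:
  assumes "x \<in> qFHC q S"
  shows "closure (range (\<lambda>n. (S ^^ n) x)) = UNIV"
proof (rule ccontr)
  assume "closure (range (\<lambda>n. (S ^^ n) x)) \<noteq> UNIV"
  then obtain y where y: "y \<notin> closure (range (\<lambda>n. (S ^^ n) x))" by blast
  let ?U = "- closure (range (\<lambda>n. (S ^^ n) x))"
  have "open ?U" "?U \<noteq> {}" using y by auto
  then have "0 < q_lower_dens q {n. (S ^^ n) x \<in> ?U}" using assms unfolding qFHC_def by blast
  moreover have "{n. (S ^^ n) x \<in> ?U} = {}"
  proof -
    have "(S ^^ n) x \<in> closure (range (\<lambda>n. (S ^^ n) x))" for n
      by (rule closure_subset[THEN subsetD], rule rangeI)
    then show ?thesis by simp
  qed
  ultimately show False using dens_empty by simp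
qed

lemma dens_q0: "\<not> 0 < q_lower_dens 0 A"
proof
  assume "0 < q_lower_dens 0 A"
  then obtain e where e: "e > 0" "eventually (\<lambda>N. e \<le> real (cntq 0 A N) / real N) sequentially"
    using dens_pos_iff by blast
  obtain N0 :: nat where N0: "real N0 > 2 / e" using reals_Archimedean2 by blast
  have "eventually (\<lambda>N::nat. N \<ge> N0 + 1) sequentially" by (rule eventually_ge_at_top)
  with e(2) have "eventually (\<lambda>N. False) sequentially"
  proof eventually_elim
    case (elim N)
    have c: "cntq 0 A N \<le> 2"
    proof -
      have "{n\<in>A. n \<le> N ^ 0} \<subseteq> {0..1}" by auto
      then have "card {n\<in>A. n \<le> N ^ 0} \<le> card {0..(1::nat)}" by (intro card_mono) auto
      then show ?thesis by (simp add: cntq_def)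
    qed
    have Npos: "real N > 0" using elim(2) by simp
    have "e * real N \<le> real (cntq 0 A N)" using elim(1) Npos by (simp add: field_simps)
    also have "\<dots> \<le> 2" using c by simp
    finally have "e * real N \<le> 2" .
    moreover have "e * real N > e * (2 / e)"
      using N0 elim(2) e(1) by (intro mult_strict_left_mono) auto
    ultimately show False using e(1) by simp
  qed
  then show False by simp
qed

lemma rot_iter: "clo T \<Longrightarrow> ((\<lambda>y. sc c (T y)) ^^ m) z = sc (c ^ m) ((T ^^ m) z)"
  by (induction m) (auto simp: clo_sc)

lemma clo_rot: assumes T: "clo T" shows "clo (\<lambda>y. sc c (T y))"
proof -
  have "sc c (T (a + b)) = sc c (T a) + sc c (T b)" for a b by (simp add: clo_add[OF T] scale_right_distrib)
  moreover have "sc c (T (sc d a)) = sc d (sc c (T a))" for d a by (simp add: clo_sc[OF T] mult.commute)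
  moreover have "continuous_on UNIV (\<lambda>y. sc c (T y))" by (rule cont_sc[OF continuous_on_const clo_cont[OF T]])
  ultimately show ?thesis by (simp add: clo_def)
qed

lemma qFHC_rot:
  assumes T: "clo T" and c: "cmod c = 1" and x: "x \<in> qFHC q T"
  shows "x \<in> qFHC q (\<lambda>y. sc c (T y))"
  unfolding qFHC_def
proof (intro CollectI allI impI)
  fix U :: "'a set" assume U: "open U \<and> U \<noteq> {}"
  then obtain y0 where y0: "y0 \<in> U" by blast
  interpret L: lm sc T x c
    by unfold_locales (use T c qFHC_dense[OF x] in auto)
  define Op where "Op s = (\<lambda>p::'a \<times> complex. sc (snd p * c ^ s) ((T ^^ s) (fst p))) -` U" for s
  have oO: "open (Op s)" for s
  proof -
    have "continuous_on UNIV (\<lambda>p::'a \<times> complex. sc (snd p * c ^ s) ((T ^^ s) (fst p)))"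
      by (intro cont_sc continuous_intros continuous_on_compose2[OF clo_cont[OF clo_funpow[OF T]]]) auto
    then show ?thesis unfolding Op_def
      using continuous_on_open_vimage[OF open_UNIV, THEN iffD1, rule_format, OF _ U[THEN conjunct1]] by simp
  qed
  have cov: "{x} \<times> sphere 0 1 \<subseteq> (\<Union>s\<in>UNIV. Op s)"
  proof clarsimp
    fix \<phi> :: complex assume "cmod \<phi> = 1"
    then obtain s where "sc (\<phi> * c ^ s) ((T ^^ s) x) \<in> U" using L.rot_visit U y0 by blast
    then show "\<exists>s. (x, \<phi>) \<in> Op s" by (auto simp: Op_def)
  qed
  have cpt: "compact ({x} \<times> sphere (0::complex) 1)" by (intro compact_Times compact_sing compact_sphere)
  have "\<exists>Sf. Sf \<subseteq> UNIV \<and> finite Sf \<and> {x} \<times> sphere 0 1 \<subseteq> (\<Union>s\<in>Sf. Op s)"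
    by (rule compactE_image[OF cpt, of UNIV Op]) (use oO cov in blast)+
  then obtain Sf where Sf: "finite Sf" "{x} \<times> sphere 0 1 \<subseteq> (\<Union>s\<in>Sf. Op s)" by blast
  have oW: "open (\<Union>s\<in>Sf. Op s)" using oO by auto
  obtain V where V: "x \<in> V" "open V" "V \<times> sphere 0 1 \<subseteq> (\<Union>s\<in>Sf. Op s)"
    using Elementary_Topology.tube_lemma[OF compact_sphere oW Sf(2)] by metis
  define A where "A = {n. (T ^^ n) x \<in> V}"
  have "\<forall>U. open U \<and> U \<noteq> {} \<longrightarrow> 0 < q_lower_dens q {n. (T ^^ n) x \<in> U}"
    using x by (simp add: qFHC_def)
  then have dA: "0 < q_lower_dens q A" using V(1,2) unfolding A_def by blast
  define B where "B = {n. ((\<lambda>y. sc c (T y)) ^^ n) x \<in> U}"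
  have ex: "\<exists>s\<in>Sf. n + s \<in> B" if n: "n \<in> A" for n
  proof -
    have "((T ^^ n) x, c ^ n) \<in> V \<times> sphere 0 1" using n c by (simp add: A_def norm_power)
    then obtain s where s: "s \<in> Sf" "((T ^^ n) x, c ^ n) \<in> Op s" using V(3) by blast
    then have "sc (c ^ n * c ^ s) ((T ^^ s) ((T ^^ n) x)) \<in> U" by (simp add: Op_def)
    moreover have "(T ^^ (n + s)) x = (T ^^ s) ((T ^^ n) x)"
      by (simp only: add.commute[of n s] funpow_add o_apply)
    ultimately have "sc (c ^ (n + s)) ((T ^^ (n + s)) x) \<in> U" by (simp add: power_add)
    then show ?thesis using s(1) by (auto simp: B_def rot_iter[OF T])
  qed
  define g where "g n = n + (SOME s. s \<in> Sf \<and> n + s \<in> B)" for n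
  have gB: "g n \<in> B \<and> g n \<le> n + sum id Sf" if n: "n \<in> A" for n
  proof -
    have "(SOME s. s \<in> Sf \<and> n + s \<in> B) \<in> Sf \<and> n + (SOME s. s \<in> Sf \<and> n + s \<in> B) \<in> B"
      using someI_ex[of "\<lambda>s. s \<in> Sf \<and> n + s \<in> B"] ex[OF n] by blast
    moreover have "s \<le> sum id Sf" if "s \<in> Sf" for s using member_le_sum[of s Sf id] Sf(1) that by simp
    ultimately show ?thesis by (auto simp: g_def)
  qed
  have fib: "finite {n\<in>A. g n = m} \<and> card {n\<in>A. g n = m} \<le> card Sf" for m
  proof -
    have sub: "{n\<in>A. g n = m} \<subseteq> (\<lambda>s. m - s) ` Sf"
    proof
      fix n assume "n \<in> {n\<in>A. g n = m}"
      then have n: "n \<in> A" "g n = m" by auto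
      have "(SOME s. s \<in> Sf \<and> n + s \<in> B) \<in> Sf"
        using someI_ex[of "\<lambda>s. s \<in> Sf \<and> n + s \<in> B"] ex[OF n(1)] by blast
      moreover have "n = m - (SOME s. s \<in> Sf \<and> n + s \<in> B)" using n(2) by (auto simp: g_def)
      ultimately show "n \<in> (\<lambda>s. m - s) ` Sf" by blast
    qed
    have "finite ((\<lambda>s. m - s) ` Sf)" using Sf(1) by simp
    moreover have "card ((\<lambda>s. m - s) ` Sf) \<le> card Sf" by (rule card_image_le[OF Sf(1)])
    ultimately show ?thesis using sub card_mono[of "(\<lambda>s. m - s) ` Sf" "{n\<in>A. g n = m}"]
      by (simp add: finite_subset)
  qed
  have "0 < q_lower_dens q B" by (rule dens_transfer[OF dA gB fib])
  then show "0 < q_lower_dens q {n. ((\<lambda>y. sc c (T y)) ^^ n) x \<in> U}" by (simp add: B_def)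
qed


lemma mod_neg_aux: "(p::nat) \<ge> 1 \<Longrightarrow> (n mod p + (p - n mod p) mod p) mod p = 0"
proof (cases "n mod p = 0")
  case True then show ?thesis by simp
next
  case False
  assume p: "p \<ge> 1"
  have "n mod p < p" using p by simp
  then have "(p - n mod p) mod p = p - n mod p" using False by simp
  then show ?thesis using \<open>n mod p < p\<close> by simp
qed

lemma qFHC_pow:
  assumes T: "clo T" and p: "p \<ge> 1" and x: "x \<in> qFHC q T"
  shows "x \<in> qFHC q (T ^^ p)"
  unfolding qFHC_def
proof (intro CollectI allI impI)
  fix U :: "'a set" assume U: "open U \<and> U \<noteq> {}"
  then obtain y0 where y0: "y0 \<in> U" by blast
  define lam where "lam = cis (2 * pi / real p)"
  have lam1: "cmod lam = 1" by (simp add: lam_def)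
  have lamk: "lam ^ k = cis (2 * pi * real k / real p)" for k
    unfolding lam_def Complex.DeMoivre by (simp add: field_simps)
  have lamp: "lam ^ p = 1" using p by (simp add: lamk)
  interpret L: lm sc T x lam
    by unfold_locales (use T lam1 qFHC_dense[OF x] in auto)
  have lam_mod: "lam ^ a = lam ^ (a mod p)" for a
  proof -
    have "lam ^ a = lam ^ (p * (a div p) + a mod p)" by simp
    also have "\<dots> = (lam ^ p) ^ (a div p) * lam ^ (a mod p)" by (simp only: power_add power_mult)
    finally show ?thesis using lamp by simp
  qed
  have inj: "inj_on (\<lambda>k. cis (2 * pi * real k / real p)) {..<p}"
    using Complex.bij_betw_roots_unity[of p] p by (simp add: bij_betw_def)
  have modeq: "a mod p = b mod p" if "lam ^ a = lam ^ b" for a b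
  proof -
    have "cis (2 * pi * real (a mod p) / real p) = cis (2 * pi * real (b mod p) / real p)"
      using that lam_mod[of a] lam_mod[of b] by (simp add: lamk)
    moreover have "a mod p \<in> {..<p}" "b mod p \<in> {..<p}" using p by auto
    ultimately show ?thesis using inj by (auto dest: inj_onD)
  qed
  have ex: "\<exists>s. (T ^^ s) x \<in> U \<and> s mod p = r mod p" for r
  proof -
    obtain s where "(T ^^ s) x \<in> U" "lam ^ s = lam ^ r"
      using L.pow_visit[OF p lamp U[THEN conjunct1] y0] by blast
    then show ?thesis using modeq by blast
  qed
  define sr where "sr r = (SOME s. (T ^^ s) x \<in> U \<and> s mod p = r mod p)" for r
  have sr: "(T ^^ sr r) x \<in> U \<and> sr r mod p = r mod p" for r
    unfolding sr_def by (rule someI_ex[OF ex])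
  define V where "V = (\<Inter>r\<in>{..<p}. (T ^^ sr r) -` U)"
  have oV: "open V" unfolding V_def
  proof (rule open_INT)
    show "\<forall>r\<in>{..<p}. open ((T ^^ sr r) -` U)"
    proof
      fix r
      have "continuous_on UNIV (T ^^ sr r)" by (rule clo_cont[OF clo_funpow[OF T]])
      from continuous_on_open_vimage[OF open_UNIV, THEN iffD1, rule_format, OF this U[THEN conjunct1]]
      show "open ((T ^^ sr r) -` U)" by simp
    qed
  qed simp
  have xV: "x \<in> V" using sr by (simp add: V_def)
  have "\<forall>U. open U \<and> U \<noteq> {} \<longrightarrow> 0 < q_lower_dens q {n. (T ^^ n) x \<in> U}"
    using x by (simp add: qFHC_def)
  then have dA: "0 < q_lower_dens q {n. (T ^^ n) x \<in> V}" using oV xV by blast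
  define B where "B = {m. ((T ^^ p) ^^ m) x \<in> U}"
  define s where "s n = sr ((p - n mod p) mod p)" for n
  define g where "g n = (n + s n) div p" for n
  have rlt: "(p - n mod p) mod p < p" for n using p by simp
  have sdiv: "p * g n = n + s n" for n
  proof -
    have "s n mod p = ((p - n mod p) mod p) mod p" using sr[of "(p - n mod p) mod p"] by (simp add: s_def)
    then have sm: "s n mod p = (p - n mod p) mod p" by simp
    have "(n + s n) mod p = (n mod p + s n mod p) mod p" by (rule mod_add_eq[symmetric])
    also have "\<dots> = 0" unfolding sm by (rule mod_neg_aux[OF p])
    finally have m0: "(n + s n) mod p = 0" .
    show ?thesis using div_mult_mod_eq[of "n + s n" p] m0 by (simp add: g_def mult.commute)
  qed
  have smax: "s n \<le> sum sr {..<p}" for n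
  proof -
    have "(p - n mod p) mod p \<in> {..<p}" using rlt[of n] by simp
    then have "sr ((p - n mod p) mod p) \<le> sum sr {..<p}"
      using member_le_sum[of "(p - n mod p) mod p" "{..<p}" sr] by simp
    then show ?thesis by (simp add: s_def)
  qed
  have gB: "g n \<in> B \<and> g n \<le> n + sum sr {..<p}" if n: "n \<in> {n. (T ^^ n) x \<in> V}" for n
  proof
    have "(T ^^ n) x \<in> V" using n by simp
    then have "(T ^^ n) x \<in> (T ^^ sr ((p - n mod p) mod p)) -` U"
      unfolding V_def using rlt[of n] by blast
    then have "(T ^^ s n) ((T ^^ n) x) \<in> U" by (simp add: s_def)
    moreover have "((T ^^ p) ^^ g n) x = (T ^^ s n) ((T ^^ n) x)"
    proof -
      have "((T ^^ p) ^^ g n) x = (T ^^ (p * g n)) x" by (simp only: funpow_mult)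
      also have "\<dots> = (T ^^ (s n + n)) x" by (simp only: sdiv add.commute)
      also have "\<dots> = (T ^^ s n) ((T ^^ n) x)" by (simp only: funpow_add o_apply)
      finally show ?thesis .
    qed
    ultimately show "g n \<in> B" by (simp add: B_def)
    have "g n \<le> p * g n" using p by simp
    then show "g n \<le> n + sum sr {..<p}" using sdiv[of n] smax[of n] by linarith
  qed
  have fib: "finite {n\<in>{n. (T ^^ n) x \<in> V}. g n = m} \<and> card {n\<in>{n. (T ^^ n) x \<in> V}. g n = m} \<le> card (sr ` {..<p})" for m
  proof -
    have sub: "{n\<in>{n. (T ^^ n) x \<in> V}. g n = m} \<subseteq> (\<lambda>t. p * m - t) ` (sr ` {..<p})"
    proof
      fix n assume "n \<in> {n\<in>{n. (T ^^ n) x \<in> V}. g n = m}"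
      then have gm: "g n = m" by auto
      have "n = p * m - s n" using sdiv[of n] gm by simp
      moreover have "s n \<in> sr ` {..<p}" using rlt[of n] by (simp add: s_def)
      ultimately show "n \<in> (\<lambda>t. p * m - t) ` (sr ` {..<p})" by blast
    qed
    have f: "finite ((\<lambda>t. p * m - t) ` (sr ` {..<p}))" by simp
    have "card ((\<lambda>t. p * m - t) ` (sr ` {..<p})) \<le> card (sr ` {..<p})" by (rule card_image_le) simp
    then show ?thesis using sub f card_mono[OF f sub] by (simp add: finite_subset)
  qed
  have "0 < q_lower_dens q B" by (rule dens_transfer[OF dA gB fib])
  then show "0 < q_lower_dens q {n. ((T ^^ p) ^^ n) x \<in> U}" by (simp add: B_def)
qed

lemma qFHC_q1:
  fixes S :: "'a \<Rightarrow> 'a"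
  shows "x \<in> qFHC q S \<Longrightarrow> q \<ge> 1"
proof (rule ccontr)
  assume x: "x \<in> qFHC q S" and "\<not> q \<ge> 1"
  then have q0: "q = 0" by simp
  have "\<forall>U. open U \<and> U \<noteq> {} \<longrightarrow> 0 < q_lower_dens q {n. (S ^^ n) x \<in> U}"
    using x by (simp add: qFHC_def)
  then have "0 < q_lower_dens q {n. (S ^^ n) x \<in> (UNIV::'a set)}" by blast
  then show False using dens_q0 q0 by simp
qed

lemma qFHC_pow_rev:
  fixes T :: "'a \<Rightarrow> 'a"
  assumes p: "p \<ge> 1" and x: "x \<in> qFHC q (T ^^ p)"
  shows "x \<in> qFHC q T"
  unfolding qFHC_def
proof (intro CollectI allI impI)
  fix U :: "'a set" assume U: "open U \<and> U \<noteq> {}"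
  have q: "q \<ge> 1" by (rule qFHC_q1[OF x])
  have "0 < q_lower_dens q {m. ((T ^^ p) ^^ m) x \<in> U}" using x U by (simp add: qFHC_def)
  then show "0 < q_lower_dens q {n. (T ^^ n) x \<in> U}"
    by (rule dens_scale[OF _ p q]) (simp add: funpow_mult)
qed

end

lemma tvs_of: "complex_tvs sc \<Longrightarrow> tvs sc"
  unfolding complex_tvs_def tvs_def tvs_axioms_def by auto

theorem theorem5p2:
  fixes sc :: "complex \<Rightarrow> 'a::{ab_group_add,topological_space} \<Rightarrow> 'a"
    and T :: "'a \<Rightarrow> 'a" and q :: nat
  assumes "complex_tvs sc"
    and "separable_type TYPE('a)"
    and "cont_lin_op sc T"
    and "q_freq_hypercyclic q T"
  shows "\<forall>(c::complex) (p::nat). cmod c = 1 \<and> p \<ge> 1 \<longrightarrow>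
           q_freq_hypercyclic q (\<lambda>x. sc c (T x))
         \<and> q_freq_hypercyclic q (T ^^ p)
         \<and> qFHC q T = qFHC q (\<lambda>x. sc c (T x))
         \<and> qFHC q T = qFHC q (T ^^ p)"
proof (intro allI impI)
  fix c :: complex and p :: nat
  assume cp: "cmod c = 1 \<and> p \<ge> 1"
  interpret tvs sc by (rule tvs_of[OF assms(1)])
  have T: "clo T" by (rule clo_of[OF assms(3)])
  have e1: "qFHC q T = qFHC q (\<lambda>x. sc c (T x))"
  proof
    show "qFHC q T \<subseteq> qFHC q (\<lambda>x. sc c (T x))" using qFHC_rot[OF T] cp by blast
    show "qFHC q (\<lambda>x. sc c (T x)) \<subseteq> qFHC q T"
    proof
      fix y assume y: "y \<in> qFHC q (\<lambda>x. sc c (T x))"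
      have "cmod (cnj c) = 1" using cp by simp
      from qFHC_rot[OF clo_rot[OF T] this y]
      have "y \<in> qFHC q (\<lambda>z. sc (cnj c) (sc c (T z)))" .
      moreover have "(\<lambda>z. sc (cnj c) (sc c (T z))) = T"
      proof
        fix z
        have "cnj c * c = 1" using cp complex_norm_square[of c] by (simp add: mult.commute)
        then show "sc (cnj c) (sc c (T z)) = T z" by simp
      qed
      ultimately show "y \<in> qFHC q T" by simp
    qed
  qed
  have e2: "qFHC q T = qFHC q (T ^^ p)"
    using qFHC_pow[OF T] qFHC_pow_rev cp by blast
  have ne: "qFHC q T \<noteq> {}" using assms(4) by (simp add: q_freq_hypercyclic_def)
  show "q_freq_hypercyclic q (\<lambda>x. sc c (T x))
         \<and> q_freq_hypercyclic q (T ^^ p)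
         \<and> qFHC q T = qFHC q (\<lambda>x. sc c (T x))
         \<and> qFHC q T = qFHC q (T ^^ p)"
    using e1 e2 ne by (simp add: q_freq_hypercyclic_def)
qed


end
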